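(* For every integer $l\ge0$ there exists $\theta\in\mathcal{S}(\mathbf{R})$ with $\int_{-\infty}^{+\infty}\theta(y)\,dy=1$ such that, with $K(x)=\int_{-\infty}^{x}\theta(y)\,dy$, for all real numbers $h_0$ and $\Delta h\neq0$ and $a=h_0+\frac{\Delta h}{2}$, the shock wave $w(t,x,\varepsilon)=h_0+\Delta h\,K\!\left(\frac{x-at}{\varepsilon}\right)$ is a solution of the Hopf equation $u_t+uu_x=0$ up to $e^{-l}$ in the sense of $\mathbf{R}\langle\varepsilon\rangle$-distributions. Equivalently, $\theta$ satisfies $$\frac12\int_{-\infty}^{+\infty}x^k\theta(x)\,dx=\int_{-\infty}^{+\infty}x^k\theta(x)\Big(\int_{-\infty}^{x}\theta(y)\,dy\Big)dx,\qquad k=0,1,\dots,l-1.$$ Moreover, if $l\ge1$, every shock wave $w=h_0+\Delta h\,K\big(\frac{x-at}{\varepsilon}\big)$ of this form solving the Hopf equation up to $e^{-l}$ satisfies the Rankine--Hugoniot condition $\frac{a-h_0}{\Delta h}=\frac12$.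
   Context: Shock waves: functions $w(t,x,\varepsilon)=h_0+\Delta h\,K\big(\frac{x-at}{\varepsilon}\big)$, $\varepsilon\in(0,1]$, with $h_0,\Delta h,a\in\mathbf{R}$, $\Delta h\ne0$, $K(x)=\int_{-\infty}^x\theta(y)\,dy$, $\theta\in\mathcal{S}(\mathbf{R})$ (Schwartz space), $\int_{-\infty}^{+\infty}\theta=1$. Solution up to $e^{-l}$ in the sense of $\mathbf{R}\langle\varepsilon\rangle$-distributions: a smooth family $w(t,x,\varepsilon)$ is such a solution of $u_t+uu_x=0$ (for $t\in[0,T]$) if for every $t\in[0,T]$ and every $\psi\in\mathcal{S}(\mathbf{R})$ the quantity $I(t,\varepsilon)=\int_{-\infty}^{+\infty}\{w_t+ww_x\}(t,x,\varepsilon)\psi(x)\,dx$ admits an asymptotic expansion $\sum_{k\ge0}\xi_k\varepsilon^k$ as $\varepsilon\to0^+$ (obtained by substituting $x=at+\varepsilon y$ and Taylor-expanding $\psi$) whose coefficients satisfy $\xi_k=0$ for all $k<l$; equivalently, this formal series in the field of Laurent series $\mathbf{R}\langle\varepsilon\rangle$ has non-Archimedean norm $|\cdot|_\nu\le e^{-l}$, where $|x|_\nu=e^{-\nu(x)}$ and $\nu(\sum_{n\ge0}\xi_{n+k}\varepsilon^{n+k})=k$ for $\xi_k\ne0$, $\nu(0)=\infty$. *)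

theory Defs
  imports "HOL-Analysis.Analysis" "HOL-Library.Landau_Symbols"
begin

definition schwartz :: "(real \<Rightarrow> real) \<Rightarrow> bool" where
  "schwartz f \<longleftrightarrow>
     (\<forall>n x. ((deriv ^^ n) f) differentiable (at x)) \<and>
     (\<forall>m n. \<exists>C. \<forall>x. \<bar>x\<bar> ^ m * \<bar>(deriv ^^ n) f x\<bar> \<le> C)"

definition Kfun :: "(real \<Rightarrow> real) \<Rightarrow> real \<Rightarrow> real" where
  "Kfun \<theta> x = integral {..x} \<theta>"

definition shock_wave ::
  "(real \<Rightarrow> real) \<Rightarrow> real \<Rightarrow> real \<Rightarrow> real \<Rightarrow> real \<Rightarrow> real \<Rightarrow> real \<Rightarrow> real" where
  "shock_wave \<theta> h0 dh a t x \<epsilon> = h0 + dh * Kfun \<theta> ((x - a * t) / \<epsilon>)"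

definition has_asymp_expansion :: "(real \<Rightarrow> real) \<Rightarrow> (nat \<Rightarrow> real) \<Rightarrow> bool" where
  "has_asymp_expansion I \<xi> \<longleftrightarrow>
     (\<forall>N. (\<lambda>\<epsilon>. I \<epsilon> - (\<Sum>k<N. \<xi> k * \<epsilon> ^ k)) \<in> O[at_right 0](\<lambda>\<epsilon>. \<epsilon> ^ N))"

definition hopf_pairing ::
  "(real \<Rightarrow> real \<Rightarrow> real \<Rightarrow> real) \<Rightarrow> (real \<Rightarrow> real) \<Rightarrow> real \<Rightarrow> real \<Rightarrow> real" where
  "hopf_pairing w \<psi> t \<epsilon> =
     integral UNIV (\<lambda>x. (deriv (\<lambda>s. w s x \<epsilon>) t + w t x \<epsilon> * deriv (\<lambda>y. w t y \<epsilon>) x) * \<psi> x)"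

definition hopf_solution_upto ::
  "(real \<Rightarrow> real \<Rightarrow> real \<Rightarrow> real) \<Rightarrow> real \<Rightarrow> nat \<Rightarrow> bool" where
  "hopf_solution_upto w T l \<longleftrightarrow>
     (\<forall>t\<in>{0..T}. \<forall>\<psi>. schwartz \<psi> \<longrightarrow>
        (\<exists>\<xi>. has_asymp_expansion (hopf_pairing w \<psi> t) \<xi> \<and> (\<forall>k<l. \<xi> k = 0)))"

end

theory Submission
  imports Defs
begin

definition decays :: "(real \<Rightarrow> real) \<Rightarrow> bool" where
  "decays f \<longleftrightarrow> (\<forall>m::nat. \<exists>C. \<forall>x. \<bar>x\<bar> ^ m * \<bar>f x\<bar> \<le> C)"

lemma decaysD: "decays f \<Longrightarrow> \<exists>C. \<forall>x. \<bar>x\<bar> ^ m * \<bar>f x\<bar> \<le> C"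
  by (auto simp: decays_def)

lemma integrable_inv1px2: "integrable lborel (\<lambda>x::real. 1 / (1 + x\<^sup>2))"
proof -
  have "set_integrable lborel (einterval (-\<infinity>) \<infinity>) (\<lambda>x::real. 1 / (1 + x\<^sup>2))"
  proof (rule interval_integral_FTC_nonneg(1)[where F = arctan and A = "-pi/2" and B = "pi/2"])
    show "- \<infinity> < (\<infinity>::ereal)" by simp
    fix x :: real
    show "DERIV arctan x :> 1 / (1 + x\<^sup>2)"
      using DERIV_arctan[of x] by (simp add: divide_inverse)
    show "isCont (\<lambda>x::real. 1 / (1 + x\<^sup>2)) x"
      by (intro continuous_intros) (metis add_pos_nonneg less_irrefl zero_le_power2 zero_less_one)
  next
    show "AE x in lborel. - \<infinity> < ereal x \<longrightarrow> ereal x < \<infinity> \<longrightarrow> 0 \<le> 1 / (1 + x\<^sup>2)"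
      by (auto intro!: AE_I2 simp: add_nonneg_nonneg)
    show "((arctan \<circ> real_of_ereal) \<longlongrightarrow> - pi / 2) (at_right (- \<infinity>))"
      unfolding ereal_tendsto_simps1 using tendsto_arctan_at_bot by simp
    show "((arctan \<circ> real_of_ereal) \<longlongrightarrow> pi / 2) (at_left \<infinity>)"
      unfolding ereal_tendsto_simps1 by (rule tendsto_arctan_at_top)
  qed
  then show ?thesis by (simp add: set_integrable_def)
qed

lemma decays_bound: "decays f \<Longrightarrow> \<exists>C. \<forall>x. \<bar>f x\<bar> \<le> C * (1 / (1 + x\<^sup>2))"
proof -
  assume d: "decays f"
  obtain C0 where C0: "\<And>x. \<bar>x\<bar> ^ 0 * \<bar>f x\<bar> \<le> C0" using decaysD[OF d, of 0] by blast
  obtain C2 where C2: "\<And>x. \<bar>x\<bar> ^ 2 * \<bar>f x\<bar> \<le> C2" using decaysD[OF d, of 2] by blast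
  show ?thesis
  proof (intro exI allI)
    fix x :: real
    have "(1 + x\<^sup>2) * \<bar>f x\<bar> \<le> C0 + C2" using C0[of x] C2[of x]
      by (simp add: algebra_simps power2_abs)
    moreover have "0 < 1 + x\<^sup>2" by (simp add: add_pos_nonneg)
    ultimately show "\<bar>f x\<bar> \<le> (C0 + C2) * (1 / (1 + x\<^sup>2))"
      by (simp add: field_simps)
  qed
qed

lemma decays_integrable:
  assumes c: "continuous_on UNIV f" and d: "decays f"
  shows "integrable lborel f"
proof -
  obtain C where C: "\<And>x. \<bar>f x\<bar> \<le> C * (1 / (1 + x\<^sup>2))" using decays_bound[OF d] by blast
  show ?thesis
  proof (rule Bochner_Integration.integrable_bound)
    show "integrable lborel (\<lambda>x. C * (1 / (1 + x\<^sup>2)))"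
      using integrable_mult_right[OF integrable_inv1px2, of C] by simp
    show "f \<in> borel_measurable lborel"
      using borel_measurable_continuous_onI[OF c] by simp
    show "AE x in lborel. norm (f x) \<le> norm (C * (1 / (1 + x\<^sup>2)))"
    proof (intro AE_I2)
      fix x
      show "norm (f x) \<le> norm (C * (1 / (1 + x\<^sup>2)))"
        using C[of x] abs_ge_self[of "C * (1 / (1 + x\<^sup>2))"] by simp
    qed
  qed
qed

lemma integrable_lborel_on:
  assumes "integrable lborel (f::real\<Rightarrow>real)" "S \<in> sets borel"
  shows "f integrable_on S" "set_lebesgue_integral lborel S f = integral S f"
proof -
  have "set_integrable lborel S f" unfolding set_integrable_def
    using assms by (intro integrable_mult_indicator) auto
  then show "f integrable_on S" "set_lebesgue_integral lborel S f = integral S f"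
    using set_borel_integral_eq_integral by auto
qed

lemma FTC_R:
  fixes f F :: "real \<Rightarrow> real"
  assumes F: "\<And>x. (F has_real_derivative f x) (at x)"
    and c: "continuous_on UNIV f" and i: "integrable lborel f"
    and A: "(F \<longlongrightarrow> A) at_bot" and B: "(F \<longlongrightarrow> B) at_top"
  shows "(f has_integral (B - A)) UNIV"
proof -
  have "(LBINT x=-\<infinity>..\<infinity>. f x) = B - A"
  proof (rule interval_integral_FTC_integrable)
    show "- \<infinity> < (\<infinity>::ereal)" by simp
    fix x
    show "(F has_vector_derivative f x) (at x)"
      using F[of x] by (simp add: has_real_derivative_iff_has_vector_derivative)
    show "isCont f x" using c by (simp add: continuous_on_eq_continuous_at)
  next
    show "set_integrable lborel (einterval (- \<infinity>) \<infinity>) f"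
      using i by (simp add: set_integrable_def)
    show "((F \<circ> real_of_ereal) \<longlongrightarrow> A) (at_right (- \<infinity>))"
      unfolding ereal_tendsto_simps1 by (rule A)
    show "((F \<circ> real_of_ereal) \<longlongrightarrow> B) (at_left \<infinity>)"
      unfolding ereal_tendsto_simps1 by (rule B)
  qed
  moreover have "(LBINT x=-\<infinity>..\<infinity>. f x) = integral UNIV f"
    using integrable_lborel_on(2)[OF i, of UNIV]
    by (simp add: interval_lebesgue_integral_def)
  moreover have "f integrable_on UNIV" by (rule integrable_lborel_on(1)[OF i]) simp
  ultimately show ?thesis
    using has_integral_integral by metis
qed

lemma decays_tendsto:
  assumes "decays f" shows "(f \<longlongrightarrow> 0) at_top" "(f \<longlongrightarrow> 0) at_bot"
proof -
  obtain C where C: "\<And>x. \<bar>x\<bar> ^ 1 * \<bar>f x\<bar> \<le> C" using decaysD[OF assms, of 1] by blast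
  have b: "\<bar>f x\<bar> \<le> C / \<bar>x\<bar>" if "x \<noteq> 0" for x
    using C[of x] that by (simp add: field_simps)
  have "((\<lambda>x::real. C / \<bar>x\<bar>) \<longlongrightarrow> 0) at_top"
    by (rule tendsto_divide_0[OF tendsto_const filterlim_at_top_imp_at_infinity[OF filterlim_abs_real]])
  moreover have "eventually (\<lambda>x. norm (f x) \<le> C / \<bar>x\<bar>) at_top"
    using eventually_gt_at_top[of 0] by eventually_elim (simp only: real_norm_def, rule b, simp)
  ultimately show "(f \<longlongrightarrow> 0) at_top" by (metis Lim_null_comparison)
  have "filterlim (\<lambda>x::real. \<bar>x\<bar>) at_top at_bot"
    using filterlim_compose[OF filterlim_abs_real filterlim_uminus_at_top_at_bot] by simp
  then have "((\<lambda>x::real. C / \<bar>x\<bar>) \<longlongrightarrow> 0) at_bot"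
    by (rule tendsto_divide_0[OF tendsto_const filterlim_at_top_imp_at_infinity])
  moreover have "eventually (\<lambda>x. norm (f x) \<le> C / \<bar>x\<bar>) at_bot"
    using eventually_le_at_bot[of "-1::real"] by eventually_elim (simp only: real_norm_def, rule b, simp)
  ultimately show "(f \<longlongrightarrow> 0) at_bot" by (metis Lim_null_comparison)
qed

lemma decays_mult_poly: "decays f \<Longrightarrow> decays (\<lambda>x. x ^ k * f x)"
  unfolding decays_def
proof (intro allI)
  fix m assume "\<forall>m. \<exists>C. \<forall>x. \<bar>x\<bar> ^ m * \<bar>f x\<bar> \<le> C"
  then obtain C where "\<forall>x. \<bar>x\<bar> ^ (m + k) * \<bar>f x\<bar> \<le> C" by blast
  then show "\<exists>C. \<forall>x. \<bar>x\<bar> ^ m * \<bar>x ^ k * f x\<bar> \<le> C"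
    by (auto simp: abs_mult power_add power_abs mult.assoc)
qed

lemma decays_mult_bounded:
  assumes "decays f" "\<And>x. \<bar>g x\<bar> \<le> B" shows "decays (\<lambda>x. g x * f x)"
  unfolding decays_def
proof (intro allI)
  fix m
  obtain C where C: "\<And>x. \<bar>x\<bar> ^ m * \<bar>f x\<bar> \<le> C" using decaysD[OF assms(1)] by blast
  have "\<bar>x\<bar> ^ m * \<bar>g x * f x\<bar> \<le> B * C" for x
  proof -
    have "\<bar>x\<bar> ^ m * \<bar>g x * f x\<bar> = \<bar>g x\<bar> * (\<bar>x\<bar> ^ m * \<bar>f x\<bar>)" by (simp add: abs_mult)
    also have "\<dots> \<le> B * C"
      using assms(2)[of x] C[of x] by (intro mult_mono) auto
    finally show ?thesis .
  qed
  then show "\<exists>C. \<forall>x. \<bar>x\<bar> ^ m * \<bar>g x * f x\<bar> \<le> C" by blast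
qed

lemma decays_add: "decays f \<Longrightarrow> decays g \<Longrightarrow> decays (\<lambda>x. f x + g x)"
  unfolding decays_def
proof (intro allI)
  fix m assume "\<forall>m. \<exists>C. \<forall>x. \<bar>x\<bar> ^ m * \<bar>f x\<bar> \<le> C" "\<forall>m. \<exists>C. \<forall>x. \<bar>x\<bar> ^ m * \<bar>g x\<bar> \<le> C"
  then obtain C D where C: "\<And>x. \<bar>x\<bar> ^ m * \<bar>f x\<bar> \<le> C" and D: "\<And>x. \<bar>x\<bar> ^ m * \<bar>g x\<bar> \<le> D" by blast
  have "\<bar>x\<bar> ^ m * \<bar>f x + g x\<bar> \<le> C + D" for x
  proof -
    have "\<bar>x\<bar> ^ m * \<bar>f x + g x\<bar> \<le> \<bar>x\<bar> ^ m * (\<bar>f x\<bar> + \<bar>g x\<bar>)"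
      by (intro mult_left_mono abs_triangle_ineq) auto
    then show ?thesis using C[of x] D[of x] by (simp add: algebra_simps)
  qed
  then show "\<exists>C. \<forall>x. \<bar>x\<bar> ^ m * \<bar>f x + g x\<bar> \<le> C" by blast
qed

lemma decays_abs: "decays f \<Longrightarrow> decays (\<lambda>x. \<bar>f x\<bar>)"
  by (simp add: decays_def)

lemma decays_cmult: "decays f \<Longrightarrow> decays (\<lambda>x. c * f x)"
  by (rule decays_mult_bounded[where B = "\<bar>c\<bar>"]) auto

definition good :: "(real \<Rightarrow> real) \<Rightarrow> bool" where
  "good f \<longleftrightarrow> continuous_on UNIV f \<and> decays f"

lemma good_integrable: "good f \<Longrightarrow> integrable lborel f"
  by (simp add: good_def decays_integrable)

lemma set_int: "integrable lborel (f::real\<Rightarrow>real) \<Longrightarrow> S \<in> sets borel \<Longrightarrow> set_integrable lborel S f"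
  unfolding set_integrable_def by (intro integrable_mult_indicator) auto

lemma good_integrable_on: "good f \<Longrightarrow> f integrable_on S" if "S \<in> sets borel"
  using integrable_lborel_on(1)[OF good_integrable that] by blast

lemma good_has_integral: "good f \<Longrightarrow> (f has_integral integral UNIV f) UNIV"
  using good_integrable_on[of UNIV f] by (simp add: has_integral_integral)

lemma K_split:
  assumes g: "good \<theta>" and cx: "c \<le> x"
  shows "Kfun \<theta> x = integral {..c} \<theta> + integral {c..x} \<theta>"
proof -
  have "(\<theta> has_integral (integral {..c} \<theta> + integral {c..x} \<theta>)) ({..c} \<union> {c..x})"
  proof (rule has_integral_Un)
    show "(\<theta> has_integral integral {..c} \<theta>) {..c}"
      using good_integrable_on[OF _ g, of "{..c}"] by (simp add: has_integral_integral)
    show "(\<theta> has_integral integral {c..x} \<theta>) {c..x}"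
      using good_integrable_on[OF _ g, of "{c..x}"] by (simp add: has_integral_integral)
    have "{..c} \<inter> {c..x} = {c}" using cx by auto
    then show "negligible ({..c} \<inter> {c..x})" by simp
  qed
  moreover have "{..c} \<union> {c..x} = {..x}" using cx by auto
  ultimately have "(\<theta> has_integral (integral {..c} \<theta> + integral {c..x} \<theta>)) {..x}" by simp
  then show ?thesis unfolding Kfun_def by (rule integral_unique)
qed

lemma K_deriv:
  assumes g: "good \<theta>"
  shows "(Kfun \<theta> has_real_derivative \<theta> x) (at x)"
proof -
  let ?c = "x - 1"
  have c: "continuous_on {?c..x+1} \<theta>"
    using g unfolding good_def by (meson continuous_on_subset subset_UNIV)
  have "((\<lambda>u. integral {?c..u} \<theta>) has_real_derivative \<theta> x) (at x within {?c..x+1})"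
    by (rule integral_has_real_derivative[OF c]) simp
  moreover have "at x within {?c..x+1} = at x"
    by (rule at_within_interior) simp
  ultimately have "((\<lambda>u. integral {?c..u} \<theta>) has_real_derivative \<theta> x) (at x)"
    by simp
  from DERIV_add[OF DERIV_const this]
  have "((\<lambda>u. integral {..?c} \<theta> + integral {?c..u} \<theta>) has_real_derivative \<theta> x) (at x)"
    by simp
  then show ?thesis
  proof (rule has_field_derivative_transform_within_open)
    show "open {?c<..}" by simp
    show "x \<in> {?c<..}" by simp
    fix y assume "y \<in> {?c<..}"
    then show "integral {..?c} \<theta> + integral {?c..y} \<theta> = Kfun \<theta> y"
      using K_split[OF g, of ?c y] by simp
  qed
qed

lemma K_bot:
  assumes g: "good \<theta>"
  shows "(Kfun \<theta> \<longlongrightarrow> 0) at_bot"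
proof -
  have i: "integrable lborel \<theta>" using good_integrable[OF g] .
  have s1: "set_integrable lborel {..0::real} \<theta>" by (rule set_int[OF i]) simp
  have t: "((\<lambda>a. set_lebesgue_integral lborel {a..0} \<theta>) \<longlongrightarrow> set_lebesgue_integral lborel {..0::real} \<theta>) at_bot"
    by (rule tendsto_set_lebesgue_integral_at_bot[OF _ s1]) simp
  have e1: "set_lebesgue_integral lborel {a..0} \<theta> = integral {a..0} \<theta>" for a :: real
    by (rule integrable_lborel_on(2)[OF i]) simp
  have e2: "set_lebesgue_integral lborel {..0::real} \<theta> = integral {..0} \<theta>"
    by (rule integrable_lborel_on(2)[OF i]) simp
  from t have "((\<lambda>a. integral {a..0} \<theta>) \<longlongrightarrow> integral {..0} \<theta>) at_bot"
    by (simp only: e1 e2)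
  from tendsto_diff[OF tendsto_const[of "integral {..0} \<theta>"] this]
  have t2: "((\<lambda>a. integral {..0} \<theta> - integral {a..0} \<theta>) \<longlongrightarrow> 0) at_bot"
    by simp
  have ev: "eventually (\<lambda>a. integral {..0} \<theta> - integral {a..0} \<theta> = Kfun \<theta> a) at_bot"
    using eventually_le_at_bot[of "0::real"]
  proof (rule eventually_mono)
    fix a :: real assume "a \<le> 0"
    then show "integral {..0} \<theta> - integral {a..0} \<theta> = Kfun \<theta> a"
      using K_split[OF g \<open>a \<le> 0\<close>] K_split[OF g order_refl, of a] by (simp add: Kfun_def)
  qed
  show ?thesis by (rule Lim_transform_eventually[OF t2 ev])
qed

lemma K_top:
  assumes g: "good \<theta>"
  shows "(Kfun \<theta> \<longlongrightarrow> integral UNIV \<theta>) at_top"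
proof -
  have i: "integrable lborel \<theta>" using good_integrable[OF g] .
  have s1: "set_integrable lborel {0::real..} \<theta>" by (rule set_int[OF i]) simp
  have t: "((\<lambda>b. set_lebesgue_integral lborel {0..b} \<theta>) \<longlongrightarrow> set_lebesgue_integral lborel {0::real..} \<theta>) at_top"
    by (rule tendsto_set_lebesgue_integral_at_top[OF _ s1]) simp
  have e1: "set_lebesgue_integral lborel {0..b} \<theta> = integral {0..b} \<theta>" for b :: real
    by (rule integrable_lborel_on(2)[OF i]) simp
  have e2: "set_lebesgue_integral lborel {0::real..} \<theta> = integral {0..} \<theta>"
    by (rule integrable_lborel_on(2)[OF i]) simp
  from t have "((\<lambda>b. integral {0..b} \<theta>) \<longlongrightarrow> integral {0..} \<theta>) at_top"
    by (simp only: e1 e2)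
  from tendsto_add[OF tendsto_const this]
  have t2: "((\<lambda>b. integral {..0} \<theta> + integral {0..b} \<theta>) \<longlongrightarrow> integral {..0} \<theta> + integral {0..} \<theta>) at_top" .
  have "(\<theta> has_integral (integral {..0} \<theta> + integral {0..} \<theta>)) ({..0} \<union> {0..})"
  proof (rule has_integral_Un)
    show "(\<theta> has_integral integral {..0} \<theta>) {..0::real}"
      using good_integrable_on[OF _ g, of "{..0}"] by (simp add: has_integral_integral)
    show "(\<theta> has_integral integral {0..} \<theta>) {0::real..}"
      using good_integrable_on[OF _ g, of "{0..}"] by (simp add: has_integral_integral)
    have "{..0::real} \<inter> {0..} = {0}" by auto
    then show "negligible ({..0::real} \<inter> {0..})" by simp
  qed
  moreover have "{..0::real} \<union> {0..} = UNIV" by auto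
  ultimately have e3: "integral {..0} \<theta> + integral {0..} \<theta> = integral UNIV \<theta>"
    by (metis integral_unique)
  have ev: "eventually (\<lambda>b. integral {..0} \<theta> + integral {0..b} \<theta> = Kfun \<theta> b) at_top"
    using eventually_ge_at_top[of "0::real"]
  proof (rule eventually_mono)
    fix b :: real assume "0 \<le> b"
    then show "integral {..0} \<theta> + integral {0..b} \<theta> = Kfun \<theta> b"
      using K_split[OF g \<open>0 \<le> b\<close>] by simp
  qed
  show ?thesis using Lim_transform_eventually[OF t2 ev] e3 by simp
qed

lemma K_bounded:
  assumes g: "good \<theta>"
  shows "\<bar>Kfun \<theta> x\<bar> \<le> integral UNIV (\<lambda>y. \<bar>\<theta> y\<bar>)"
proof -
  have ga: "good (\<lambda>y. \<bar>\<theta> y\<bar>)" using g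
    by (auto simp: good_def decays_abs intro: continuous_intros)
  have "\<bar>Kfun \<theta> x\<bar> \<le> integral {..x} (\<lambda>y. \<bar>\<theta> y\<bar>)"
    unfolding Kfun_def
    using integral_norm_bound_integral[of \<theta> "{..x}" "\<lambda>y. \<bar>\<theta> y\<bar>"]
      good_integrable_on[OF _ g] good_integrable_on[OF _ ga] by auto
  also have "\<dots> \<le> integral UNIV (\<lambda>y. \<bar>\<theta> y\<bar>)"
    by (rule integral_subset_le) (auto intro: good_integrable_on[OF _ ga])
  finally show ?thesis .
qed

lemma K_continuous: "good \<theta> \<Longrightarrow> continuous_on UNIV (Kfun \<theta>)"
  using K_deriv by (meson DERIV_continuous continuous_at_imp_continuous_on)

inductive cls :: "(real \<Rightarrow> real) \<Rightarrow> bool" where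
  cls_const: "cls (\<lambda>x. c)"
| cls_id: "cls (\<lambda>x. x)"
| cls_gexp: "0 < b \<Longrightarrow> cls (\<lambda>x. exp (- b * x\<^sup>2 + d * x))"
| cls_add: "cls f \<Longrightarrow> cls g \<Longrightarrow> cls (\<lambda>x. f x + g x)"
| cls_mult: "cls f \<Longrightarrow> cls g \<Longrightarrow> cls (\<lambda>x. f x * g x)"
| cls_isqrt: "cls f \<Longrightarrow> 0 < \<delta> \<Longrightarrow> (\<And>x. \<delta> \<le> f x) \<Longrightarrow> cls (\<lambda>x. 1 / sqrt (f x))"

lemma cls_deriv: "cls f \<Longrightarrow> \<exists>f'. cls f' \<and> (\<forall>x. (f has_real_derivative f' x) (at x))"
proof (induction rule: cls.induct)
  case (cls_const c)
  show ?case by (intro exI[of _ "\<lambda>x. 0"]) (auto intro: cls.intros)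
next
  case cls_id
  show ?case by (intro exI[of _ "\<lambda>x. 1"]) (auto intro: cls.intros)
next
  case (cls_gexp b d)
  let ?g = "\<lambda>x. exp (- b * x\<^sup>2 + d * x) * ((- 2 * b) * x + d)"
  have "cls ?g" using cls_gexp by (intro cls.intros) auto
  moreover have "((\<lambda>x. exp (- b * x\<^sup>2 + d * x)) has_real_derivative ?g x) (at x)" for x
    by (auto intro!: derivative_eq_intros simp: power2_eq_square algebra_simps)
  ultimately show ?case by blast
next
  case (cls_add f g)
  then obtain f' g' where "cls f'" "cls g'" "\<And>x. (f has_real_derivative f' x) (at x)"
    "\<And>x. (g has_real_derivative g' x) (at x)" by blast
  then show ?case
    by (intro exI[of _ "\<lambda>x. f' x + g' x"]) (auto intro: cls.intros DERIV_add)
next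
  case (cls_mult f g)
  then obtain f' g' where "cls f'" "cls g'" "\<And>x. (f has_real_derivative f' x) (at x)"
    "\<And>x. (g has_real_derivative g' x) (at x)" by blast
  moreover have "((\<lambda>x. f x * g x) has_real_derivative f' x * g x + f x * g' x) (at x)" for x
    using DERIV_mult[OF calculation(3)[of x] calculation(4)[of x]] by (simp add: algebra_simps)
  ultimately show ?case
    by (intro exI[of _ "\<lambda>x. f' x * g x + f x * g' x"])
       (auto intro!: cls.intros cls_mult.hyps)
next
  case (cls_isqrt f \<delta>)
  then obtain f' where f': "cls f'" "\<And>x. (f has_real_derivative f' x) (at x)" by blast
  let ?h = "\<lambda>x. 1 / sqrt (f x)"
  let ?g = "\<lambda>x. (- 1 / 2 * f' x) * (?h x * ?h x * ?h x)"
  have hc: "cls ?h" using cls_isqrt by (intro cls.intros) auto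
  have "cls ?g" by (rule cls_mult[OF cls_mult[OF cls_const f'(1)] cls_mult[OF cls_mult[OF hc hc] hc]])
  moreover have "(?h has_real_derivative ?g x) (at x)" for x
  proof -
    have pos: "0 < f x" using cls_isqrt(2) cls_isqrt(3)[of x] by linarith
    have "(?h has_real_derivative (- (f' x * inverse (sqrt (f x)) / 2) / (sqrt (f x))\<^sup>2)) (at x)"
      using pos f'(2)[of x]
      by (auto intro!: derivative_eq_intros simp: power2_eq_square)
    moreover have "- (f' x * inverse (sqrt (f x)) / 2) / (sqrt (f x))\<^sup>2 = ?g x"
      using pos by (simp add: field_simps power2_eq_square)
    ultimately show ?thesis by simp
  qed
  ultimately show ?case by blast
qed

lemma cls_differentiable: "cls f \<Longrightarrow> f differentiable (at x)"
  using cls_deriv real_differentiable_def by blast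

lemma cls_continuous: "cls f \<Longrightarrow> continuous_on UNIV f"
  by (meson cls_differentiable continuous_at_imp_continuous_on differentiable_imp_continuous_within)

lemma cls_deriv_cls: "cls f \<Longrightarrow> cls (deriv f)"
proof -
  assume "cls f"
  then obtain f' where "cls f'" "\<And>x. (f has_real_derivative f' x) (at x)" using cls_deriv by blast
  moreover have "deriv f = f'" using calculation(2) DERIV_imp_deriv by blast
  ultimately show ?thesis by simp
qed

lemma cls_funpow: "cls f \<Longrightarrow> cls ((deriv ^^ n) f)"
  by (induction n) (auto intro: cls_deriv_cls)

lemma abs_pow_le_1plus: "\<bar>x::real\<bar> ^ m \<le> (1 + \<bar>x\<bar>) ^ m"
  by (intro power_mono) auto

lemma onepx_pow_mono: "N1 \<le> N \<Longrightarrow> (1 + \<bar>x::real\<bar>) ^ N1 \<le> (1 + \<bar>x\<bar>) ^ N"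
  by (intro power_increasing) auto

lemma cls_bound: "cls f \<Longrightarrow> \<exists>C N. \<forall>x. \<bar>f x\<bar> \<le> C * (1 + \<bar>x\<bar>) ^ N"
proof (induction rule: cls.induct)
  case (cls_const c)
  show ?case by (intro exI[of _ "\<bar>c\<bar>"] exI[of _ 0]) auto
next
  case cls_id
  show ?case by (intro exI[of _ 1] exI[of _ 1]) auto
next
  case (cls_gexp b d)
  have "\<bar>exp (- b * x\<^sup>2 + d * x)\<bar> \<le> exp (d\<^sup>2 / (4 * b)) * (1 + \<bar>x\<bar>) ^ 0" for x
  proof -
    have "0 \<le> b * (x - d / (2 * b))\<^sup>2" using cls_gexp by simp
    moreover have "b * (x - d / (2 * b))\<^sup>2 = b * x\<^sup>2 - d * x + d\<^sup>2 / (4 * b)"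
      using cls_gexp by (simp add: field_simps power2_eq_square)
    ultimately have "- b * x\<^sup>2 + d * x \<le> d\<^sup>2 / (4 * b)" by linarith
    then show ?thesis by simp
  qed
  then show ?case by blast
next
  case (cls_add f g)
  then obtain C1 N1 C2 N2 where b1: "\<And>x. \<bar>f x\<bar> \<le> C1 * (1 + \<bar>x\<bar>) ^ N1"
    and b2: "\<And>x. \<bar>g x\<bar> \<le> C2 * (1 + \<bar>x\<bar>) ^ N2" by blast
  have "\<bar>f x + g x\<bar> \<le> (\<bar>C1\<bar> + \<bar>C2\<bar>) * (1 + \<bar>x\<bar>) ^ (max N1 N2)" for x
  proof -
    have "\<bar>f x\<bar> \<le> \<bar>C1\<bar> * (1 + \<bar>x\<bar>) ^ (max N1 N2)"
      using b1[of x] onepx_pow_mono[of N1 "max N1 N2" x]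
      by (smt (verit, best) abs_ge_self max.cobounded1 mult_mono zero_le_power abs_ge_zero)
    moreover have "\<bar>g x\<bar> \<le> \<bar>C2\<bar> * (1 + \<bar>x\<bar>) ^ (max N1 N2)"
      using b2[of x] onepx_pow_mono[of N2 "max N1 N2" x]
      by (smt (verit, best) abs_ge_self max.cobounded2 mult_mono zero_le_power abs_ge_zero)
    moreover have "(\<bar>C1\<bar> + \<bar>C2\<bar>) * (1 + \<bar>x\<bar>) ^ (max N1 N2) = \<bar>C1\<bar> * (1 + \<bar>x\<bar>) ^ (max N1 N2) + \<bar>C2\<bar> * (1 + \<bar>x\<bar>) ^ (max N1 N2)"
      by (simp add: distrib_right)
    ultimately show ?thesis using abs_triangle_ineq[of "f x" "g x"] by linarith
  qed
  then show ?case by blast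
next
  case (cls_mult f g)
  then obtain C1 N1 C2 N2 where b1: "\<And>x. \<bar>f x\<bar> \<le> C1 * (1 + \<bar>x\<bar>) ^ N1"
    and b2: "\<And>x. \<bar>g x\<bar> \<le> C2 * (1 + \<bar>x\<bar>) ^ N2" by blast
  have "\<bar>f x * g x\<bar> \<le> (C1 * C2) * (1 + \<bar>x\<bar>) ^ (N1 + N2)" for x
  proof -
    have "\<bar>f x * g x\<bar> = \<bar>f x\<bar> * \<bar>g x\<bar>" by (simp add: abs_mult)
    also have "\<dots> \<le> (C1 * (1 + \<bar>x\<bar>) ^ N1) * (C2 * (1 + \<bar>x\<bar>) ^ N2)"
      using b1[of x] b2[of x] by (intro mult_mono) (auto intro: order_trans[OF abs_ge_zero])
    finally show ?thesis by (simp add: power_add algebra_simps)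
  qed
  then show ?case by blast
next
  case (cls_isqrt f \<delta>)
  have "\<bar>1 / sqrt (f x)\<bar> \<le> (1 / sqrt \<delta>) * (1 + \<bar>x\<bar>) ^ 0" for x
  proof -
    have "sqrt \<delta> \<le> sqrt (f x)" using cls_isqrt(3)[of x] by simp
    then show ?thesis using cls_isqrt(2) by (simp add: frac_le)
  qed
  then show ?case by blast
qed

lemma pow_le_exp: assumes t: "0 \<le> t" shows "t ^ M \<le> real M ^ M * exp t"
proof (cases "M = 0")
  case True then show ?thesis using t by simp
next
  case False
  have "(t / real M) ^ M \<le> (1 + t / real M) ^ M"
    using t by (intro power_mono) auto
  also have "\<dots> \<le> exp t"
    using False t by (intro exp_ge_one_plus_x_over_n_power_n) auto
  finally have "t ^ M / real M ^ M \<le> exp t" by (simp add: power_divide)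
  moreover have "0 < real M ^ M" using False by simp
  ultimately show ?thesis by (simp add: divide_le_eq mult.commute)
qed

lemma gauss_poly_bound:
  fixes a :: real
  assumes a: "0 < a" shows "\<exists>C. \<forall>x. (1 + \<bar>x\<bar>) ^ M * exp (- a * x\<^sup>2) \<le> C"
proof -
  have "(1 + \<bar>x\<bar>) ^ M * exp (- a * x\<^sup>2) \<le> 2 ^ M * (1 + real M ^ M / a ^ M)" for x
  proof -
    have x2: "(0::real) \<le> (x\<^sup>2) ^ M" by simp
    have p1: "(1 + \<bar>x\<bar>) ^ M \<le> 2 ^ M * (1 + (x\<^sup>2) ^ M)"
    proof (cases "\<bar>x\<bar> \<le> 1")
      case True
      then have "(1 + \<bar>x\<bar>) ^ M \<le> 2 ^ M" by (intro power_mono) auto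
      moreover have "(2::real) ^ M \<le> 2 ^ M * (1 + (x\<^sup>2) ^ M)"
        using x2 by (simp add: distrib_left)
      ultimately show ?thesis by linarith
    next
      case False
      then have "(1 + \<bar>x\<bar>) ^ M \<le> (2 * \<bar>x\<bar>) ^ M" by (intro power_mono) auto
      also have "\<dots> = 2 ^ M * \<bar>x\<bar> ^ M" by (simp add: power_mult_distrib)
      also have "\<bar>x\<bar> ^ M \<le> (x\<^sup>2) ^ M"
      proof (intro power_mono)
        have "\<bar>x\<bar> * 1 \<le> \<bar>x\<bar> * \<bar>x\<bar>" using False by (intro mult_left_mono) auto
        then show "\<bar>x\<bar> \<le> x\<^sup>2" by (simp add: power2_eq_square abs_mult_self_eq)
      qed simp
      then have "2 ^ M * \<bar>x\<bar> ^ M \<le> 2 ^ M * (1 + (x\<^sup>2) ^ M)" by simp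
      finally show ?thesis .
    qed
    have p2: "(x\<^sup>2) ^ M * exp (- a * x\<^sup>2) \<le> real M ^ M / a ^ M"
    proof -
      have "(a * x\<^sup>2) ^ M \<le> real M ^ M * exp (a * x\<^sup>2)" using a by (intro pow_le_exp) simp
      then have "a ^ M * (x\<^sup>2) ^ M \<le> real M ^ M * exp (a * x\<^sup>2)" by (simp add: power_mult_distrib)
      then have "(x\<^sup>2) ^ M \<le> real M ^ M * exp (a * x\<^sup>2) / a ^ M"
        using a by (simp add: le_divide_eq mult.commute)
      then have "(x\<^sup>2) ^ M * exp (- a * x\<^sup>2) \<le> real M ^ M * exp (a * x\<^sup>2) / a ^ M * exp (- a * x\<^sup>2)"
        by (intro mult_right_mono) auto
      also have "real M ^ M * exp (a * x\<^sup>2) / a ^ M * exp (- a * x\<^sup>2) = real M ^ M / a ^ M"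
        by (simp add: exp_minus)
      finally show ?thesis .
    qed
    have e1: "exp (- a * x\<^sup>2) \<le> 1" using a by simp
    have "(1 + \<bar>x\<bar>) ^ M * exp (- a * x\<^sup>2) \<le> 2 ^ M * (1 + (x\<^sup>2) ^ M) * exp (- a * x\<^sup>2)"
      using p1 by (intro mult_right_mono) auto
    also have "\<dots> = 2 ^ M * (exp (- a * x\<^sup>2) + (x\<^sup>2) ^ M * exp (- a * x\<^sup>2))"
      by (simp add: algebra_simps)
    also have "\<dots> \<le> 2 ^ M * (1 + real M ^ M / a ^ M)"
      using e1 p2 by (intro mult_left_mono add_mono) auto
    finally show ?thesis .
  qed
  then show ?thesis by blast
qed

definition dcls :: "(real \<Rightarrow> real) \<Rightarrow> bool" where
  "dcls f \<longleftrightarrow> (\<exists>a g. 0 < a \<and> cls g \<and> f = (\<lambda>x. exp (- a * x\<^sup>2) * g x))"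

lemma dclsI: "0 < a \<Longrightarrow> cls g \<Longrightarrow> dcls (\<lambda>x. exp (- a * x\<^sup>2) * g x)"
  unfolding dcls_def by blast

lemma dcls_add: assumes "dcls f" "dcls g" shows "dcls (\<lambda>x. f x + g x)"
proof -
  obtain a1 g1 a2 g2 where h: "0 < a1" "cls g1" "f = (\<lambda>x. exp (- a1 * x\<^sup>2) * g1 x)"
    "0 < a2" "cls g2" "g = (\<lambda>x. exp (- a2 * x\<^sup>2) * g2 x)"
    using assms unfolding dcls_def by blast
  define a where "a = min a1 a2 / 2"
  have a: "0 < a" "0 < a1 - a" "0 < a2 - a" using h by (auto simp: a_def)
  have e: "exp (- b * x\<^sup>2) = exp (- a * x\<^sup>2) * exp (- (b - a) * x\<^sup>2 + 0 * x)" for b x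
  proof -
    have "- b * x\<^sup>2 = - a * x\<^sup>2 + (- (b - a) * x\<^sup>2 + 0 * x)" by (simp add: algebra_simps)
    then show ?thesis by (simp only: exp_add[symmetric])
  qed
  have "(\<lambda>x. f x + g x) = (\<lambda>x. exp (- a * x\<^sup>2) *
      (exp (- (a1 - a) * x\<^sup>2 + 0 * x) * g1 x + exp (- (a2 - a) * x\<^sup>2 + 0 * x) * g2 x))"
  proof
    fix x
    show "f x + g x = exp (- a * x\<^sup>2) *
      (exp (- (a1 - a) * x\<^sup>2 + 0 * x) * g1 x + exp (- (a2 - a) * x\<^sup>2 + 0 * x) * g2 x)"
      unfolding h(3,6) using e[of a1 x] e[of a2 x] by (simp only: distrib_left mult.assoc)
  qed
  moreover have "cls (\<lambda>x. exp (- (a1 - a) * x\<^sup>2 + 0 * x) * g1 x + exp (- (a2 - a) * x\<^sup>2 + 0 * x) * g2 x)"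
    using a h by (intro cls.intros) auto
  ultimately show ?thesis using a unfolding dcls_def by blast
qed

lemma dcls_mult: assumes "dcls f" "cls h" shows "dcls (\<lambda>x. f x * h x)" "dcls (\<lambda>x. h x * f x)"
proof -
  obtain a g where h: "0 < a" "cls g" "f = (\<lambda>x. exp (- a * x\<^sup>2) * g x)"
    using assms unfolding dcls_def by blast
  have "cls (\<lambda>x. g x * h x)" using h assms by (intro cls.intros)
  then show "dcls (\<lambda>x. f x * h x)" "dcls (\<lambda>x. h x * f x)"
    unfolding dcls_def using h by (auto intro!: exI[of _ a] exI[of _ "\<lambda>x. g x * h x"] simp: algebra_simps)
qed

lemma dcls_deriv: "dcls f \<Longrightarrow> \<exists>f'. dcls f' \<and> (\<forall>x. (f has_real_derivative f' x) (at x))"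
proof -
  assume "dcls f"
  then obtain a g where h: "0 < a" "cls g" "f = (\<lambda>x. exp (- a * x\<^sup>2) * g x)"
    unfolding dcls_def by blast
  obtain g' where g': "cls g'" "\<And>x. (g has_real_derivative g' x) (at x)" using cls_deriv[OF h(2)] by blast
  let ?f' = "\<lambda>x. exp (- a * x\<^sup>2) * (g' x + (- 2 * a) * x * g x)"
  have "cls (\<lambda>x. g' x + (- 2 * a) * x * g x)" using g' h by (intro cls.intros)
  then have "dcls ?f'" using h by (intro dclsI)
  moreover have "(f has_real_derivative ?f' x) (at x)" for x
    unfolding h(3) using g'(2)[of x]
    by (auto intro!: derivative_eq_intros simp: power2_eq_square algebra_simps)
  ultimately show ?thesis by blast
qed

lemma dcls_deriv_dcls: "dcls f \<Longrightarrow> dcls (deriv f)"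
proof -
  assume "dcls f"
  then obtain f' where "dcls f'" "\<And>x. (f has_real_derivative f' x) (at x)" using dcls_deriv by blast
  moreover have "deriv f = f'" using calculation(2) DERIV_imp_deriv by blast
  ultimately show ?thesis by simp
qed

lemma dcls_funpow: "dcls f \<Longrightarrow> dcls ((deriv ^^ n) f)"
  by (induction n) (auto intro: dcls_deriv_dcls)

lemma dcls_differentiable: "dcls f \<Longrightarrow> f differentiable (at x)"
  using dcls_deriv real_differentiable_def by blast

lemma dcls_continuous: "dcls f \<Longrightarrow> continuous_on UNIV f"
  by (meson dcls_differentiable continuous_at_imp_continuous_on differentiable_imp_continuous_within)

lemma dcls_decays: "dcls f \<Longrightarrow> decays f"
proof -
  assume "dcls f"
  then obtain a g where h: "0 < a" "cls g" "f = (\<lambda>x. exp (- a * x\<^sup>2) * g x)"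
    unfolding dcls_def by blast
  obtain C N where C: "\<And>x. \<bar>g x\<bar> \<le> C * (1 + \<bar>x\<bar>) ^ N" using cls_bound[OF h(2)] by blast
  have C0: "0 \<le> C" using C[of 0] abs_ge_zero[of "g 0"] by simp
  show "decays f" unfolding decays_def
  proof
    fix m
    obtain D where D: "\<And>x. (1 + \<bar>x\<bar>) ^ (m + N) * exp (- a * x\<^sup>2) \<le> D"
      using gauss_poly_bound[OF h(1)] by blast
    have "\<bar>x\<bar> ^ m * \<bar>f x\<bar> \<le> C * D" for x
    proof -
      have "\<bar>x\<bar> ^ m * \<bar>f x\<bar> = exp (- a * x\<^sup>2) * (\<bar>x\<bar> ^ m * \<bar>g x\<bar>)"
        unfolding h(3) by (simp add: abs_mult)
      also have "\<dots> \<le> exp (- a * x\<^sup>2) * ((1 + \<bar>x\<bar>) ^ m * (C * (1 + \<bar>x\<bar>) ^ N))"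
        using C[of x] abs_pow_le_1plus[of x m]
        by (intro mult_left_mono mult_mono) auto
      also have "\<dots> = C * ((1 + \<bar>x\<bar>) ^ (m + N) * exp (- a * x\<^sup>2))"
        by (simp add: power_add algebra_simps)
      also have "\<dots> \<le> C * D" using D[of x] C0 by (intro mult_left_mono) auto
      finally show ?thesis .
    qed
    then show "\<exists>C. \<forall>x. \<bar>x\<bar> ^ m * \<bar>f x\<bar> \<le> C" by blast
  qed
qed

lemma dcls_good: "dcls f \<Longrightarrow> good f"
  by (simp add: good_def dcls_continuous dcls_decays)

lemma dcls_schwartz: "dcls f \<Longrightarrow> schwartz f"
  unfolding schwartz_def
proof safe
  assume f: "dcls f"
  fix n x
  show "(deriv ^^ n) f differentiable (at x)"
    using dcls_differentiable[OF dcls_funpow[OF f]] .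
next
  assume f: "dcls f"
  fix m n
  show "\<exists>C. \<forall>x. \<bar>x\<bar> ^ m * \<bar>(deriv ^^ n) f x\<bar> \<le> C"
    using dcls_decays[OF dcls_funpow[OF f]] unfolding decays_def by blast
qed

lemma schwartz_deriv:
  "schwartz f \<Longrightarrow> ((deriv ^^ n) f has_real_derivative (deriv ^^ Suc n) f x) (at x)"
  unfolding schwartz_def by (simp add: DERIV_deriv_iff_real_differentiable)

lemma schwartz_good: "schwartz f \<Longrightarrow> good ((deriv ^^ n) f)"
  unfolding good_def decays_def
proof safe
  assume "schwartz f"
  then show "continuous_on UNIV ((deriv ^^ n) f)"
    unfolding schwartz_def
    by (meson continuous_at_imp_continuous_on differentiable_imp_continuous_within)
next
  fix m assume "schwartz f"
  then show "\<exists>C. \<forall>x. \<bar>x\<bar> ^ m * \<bar>(deriv ^^ n) f x\<bar> \<le> C" unfolding schwartz_def by blast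
qed

lemma schwartz_good0: "schwartz f \<Longrightarrow> good f"
  using schwartz_good[of f 0] by simp

lemma schwartz_bounded: "schwartz f \<Longrightarrow> \<exists>B. \<forall>x. \<bar>(deriv ^^ n) f x\<bar> \<le> B"
  unfolding schwartz_def by (metis mult_1 power_0)

lemma good_mult_bounded:
  assumes "good f" "continuous_on UNIV g" "\<And>x. \<bar>g x\<bar> \<le> B"
  shows "good (\<lambda>x. g x * f x)" "good (\<lambda>x. f x * g x)"
proof -
  show "good (\<lambda>x. g x * f x)" using assms unfolding good_def
    by (auto intro: continuous_intros decays_mult_bounded)
  then show "good (\<lambda>x. f x * g x)" by (simp add: mult.commute)
qed

lemma good_poly: "good f \<Longrightarrow> good (\<lambda>x. x ^ k * f x)"
  unfolding good_def by (auto intro!: continuous_on_mult continuous_on_power continuous_on_id decays_mult_poly)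

lemma good_abs: "good f \<Longrightarrow> good (\<lambda>x. \<bar>f x\<bar>)"
  unfolding good_def by (auto intro: continuous_intros decays_abs)

lemma good_add: "good f \<Longrightarrow> good g \<Longrightarrow> good (\<lambda>x. f x + g x)"
  unfolding good_def by (auto intro: continuous_intros decays_add)

lemma good_cmult: "good f \<Longrightarrow> good (\<lambda>x. c * f x)"
  unfolding good_def by (auto intro: continuous_intros decays_cmult)

definition Th :: "(real \<Rightarrow> real) \<Rightarrow> real \<Rightarrow> real \<Rightarrow> real \<Rightarrow> real \<Rightarrow> real" where
  "Th \<theta> h0 dh a y = dh * \<theta> y * (h0 - a + dh * Kfun \<theta> y)"

lemma Th_good:
  assumes "schwartz \<theta>" shows "good (\<lambda>y. y ^ k * Th \<theta> h0 dh a y)"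
proof -
  have g: "good \<theta>" using schwartz_good0[OF assms] .
  obtain M where M: "M = integral UNIV (\<lambda>y. \<bar>\<theta> y\<bar>)" by blast
  have "good (\<lambda>y. (dh * (h0 - a + dh * Kfun \<theta> y)) * \<theta> y)"
  proof (rule good_mult_bounded(1)[OF g])
    show "continuous_on UNIV (\<lambda>y. dh * (h0 - a + dh * Kfun \<theta> y))"
      using K_continuous[OF g] by (intro continuous_intros)
    fix y
    have "\<bar>dh * (h0 - a + dh * Kfun \<theta> y)\<bar> \<le> \<bar>dh\<bar> * (\<bar>h0 - a\<bar> + \<bar>dh\<bar> * M)"
    proof -
      have "\<bar>h0 - a + dh * Kfun \<theta> y\<bar> \<le> \<bar>h0 - a\<bar> + \<bar>dh\<bar> * \<bar>Kfun \<theta> y\<bar>"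
        by (metis abs_mult abs_triangle_ineq)
      also have "\<dots> \<le> \<bar>h0 - a\<bar> + \<bar>dh\<bar> * M"
        using K_bounded[OF g, of y] M by (intro add_left_mono mult_left_mono) auto
      finally show ?thesis by (simp add: abs_mult mult_left_mono)
    qed
    then show "\<bar>dh * (h0 - a + dh * Kfun \<theta> y)\<bar> \<le> \<bar>dh\<bar> * (\<bar>h0 - a\<bar> + \<bar>dh\<bar> * M)" .
  qed
  then have "good (Th \<theta> h0 dh a)" unfolding Th_def by (simp add: algebra_simps)
  then show ?thesis by (rule good_poly)
qed

lemma shock_deriv_t:
  assumes g: "good \<theta>" and e: "0 < \<epsilon>"
  shows "deriv (\<lambda>s. shock_wave \<theta> h0 dh a s x \<epsilon>) t = dh * (\<theta> ((x - a * t) / \<epsilon>) * (- a / \<epsilon>))"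
proof -
  have "((\<lambda>s. (x - a * s) / \<epsilon>) has_real_derivative (- a / \<epsilon>)) (at t)"
    using e by (auto intro!: derivative_eq_intros)
  from DERIV_chain2[OF K_deriv[OF g] this]
  have "((\<lambda>s. Kfun \<theta> ((x - a * s) / \<epsilon>)) has_real_derivative \<theta> ((x - a * t) / \<epsilon>) * (- a / \<epsilon>)) (at t)" .
  then have "((\<lambda>s. shock_wave \<theta> h0 dh a s x \<epsilon>) has_real_derivative dh * (\<theta> ((x - a * t) / \<epsilon>) * (- a / \<epsilon>))) (at t)"
    unfolding shock_wave_def by (auto intro!: derivative_eq_intros)
  then show ?thesis by (rule DERIV_imp_deriv)
qed

lemma shock_deriv_x:
  assumes g: "good \<theta>" and e: "0 < \<epsilon>"
  shows "deriv (\<lambda>y. shock_wave \<theta> h0 dh a t y \<epsilon>) x = dh * (\<theta> ((x - a * t) / \<epsilon>) * (1 / \<epsilon>))"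
proof -
  have "((\<lambda>y. (y - a * t) / \<epsilon>) has_real_derivative (1 / \<epsilon>)) (at x)"
    using e by (auto intro!: derivative_eq_intros)
  from DERIV_chain2[OF K_deriv[OF g] this]
  have "((\<lambda>y. Kfun \<theta> ((y - a * t) / \<epsilon>)) has_real_derivative \<theta> ((x - a * t) / \<epsilon>) * (1 / \<epsilon>)) (at x)" .
  then have "((\<lambda>y. shock_wave \<theta> h0 dh a t y \<epsilon>) has_real_derivative dh * (\<theta> ((x - a * t) / \<epsilon>) * (1 / \<epsilon>))) (at x)"
    unfolding shock_wave_def by (auto intro!: derivative_eq_intros)
  then show ?thesis by (rule DERIV_imp_deriv)
qed

lemma pairing_formula:
  assumes th: "schwartz \<theta>" and ps: "schwartz \<psi>" and e: "0 < \<epsilon>"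
  shows "hopf_pairing (shock_wave \<theta> h0 dh a) \<psi> t \<epsilon> =
         integral UNIV (\<lambda>y. Th \<theta> h0 dh a y * \<psi> (a * t + \<epsilon> * y))"
proof -
  have g: "good \<theta>" using schwartz_good0[OF th] .
  let ?c = "a * t"
  define H where "H x = (1 / \<epsilon>) * (Th \<theta> h0 dh a ((x - ?c) / \<epsilon>) * \<psi> x)" for x
  define G where "G y = Th \<theta> h0 dh a y * \<psi> (?c + \<epsilon> * y)" for y
  have integrand: "(deriv (\<lambda>s. shock_wave \<theta> h0 dh a s x \<epsilon>) t +
      shock_wave \<theta> h0 dh a t x \<epsilon> * deriv (\<lambda>y. shock_wave \<theta> h0 dh a t y \<epsilon>) x) * \<psi> x = H x" for x
    unfolding shock_deriv_t[OF g e] shock_deriv_x[OF g e] H_def Th_def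
    unfolding shock_wave_def using e by (simp add: field_simps)
  have Hc: "H (?c + \<epsilon> * y) = G y / \<epsilon>" for y
    unfolding H_def G_def using e by simp
  obtain B where B: "\<And>x. \<bar>(deriv ^^ 0) \<psi> x\<bar> \<le> B" using schwartz_bounded[OF ps] by blast
  have cps: "continuous_on UNIV \<psi>" using schwartz_good0[OF ps] by (simp add: good_def)
  have gG: "good G" unfolding G_def
  proof (rule good_mult_bounded(2))
    show "good (Th \<theta> h0 dh a)" using Th_good[OF th, of 0] by simp
    show "continuous_on UNIV (\<lambda>y. \<psi> (a * t + \<epsilon> * y))"
      by (rule continuous_on_compose2[OF cps]) (auto intro: continuous_intros)
    show "\<bar>\<psi> (a * t + \<epsilon> * y)\<bar> \<le> B" for y using B by simp
  qed
  have iG: "integrable lborel G" using good_integrable[OF gG] .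
  have iH2: "integrable lborel (\<lambda>y. H (?c + \<epsilon> * y))" unfolding Hc using iG by simp
  have iH: "integrable lborel H"
    using iH2 lborel_integrable_real_affine_iff[of \<epsilon> H ?c] e by simp
  have "integral UNIV H = (\<integral>x. H x \<partial>lborel)" by (rule integral_lborel[OF iH])
  also have "\<dots> = \<bar>\<epsilon>\<bar> *\<^sub>R (\<integral>y. H (?c + \<epsilon> * y) \<partial>lborel)"
    using e by (intro lborel_integral_real_affine) simp
  also have "\<dots> = (\<integral>y. G y \<partial>lborel)" unfolding Hc using e by simp
  also have "\<dots> = integral UNIV G" by (rule integral_lborel[OF iG, symmetric])
  finally show ?thesis
    unfolding hopf_pairing_def integrand G_def by simp
qed

lemma ev_pos: "eventually (\<lambda>x::real. 0 < x) (at_right 0)"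
  using eventually_at_right_less[of "0::real"] by simp

lemma bigo_from_bound:
  assumes "eventually (\<lambda>\<epsilon>. \<bar>f \<epsilon>\<bar> \<le> C * \<epsilon> ^ N) (at_right (0::real))"
  shows "f \<in> O[at_right 0](\<lambda>\<epsilon>. \<epsilon> ^ N)"
proof (rule bigoI[where c = C])
  show "eventually (\<lambda>x. norm (f x) \<le> C * norm (x ^ N)) (at_right 0)"
    using assms ev_pos by eventually_elim (simp add: abs_of_pos)
qed

lemma int_cmul: "(f::real\<Rightarrow>real) integrable_on S \<Longrightarrow> (\<lambda>x. c * f x) integrable_on S"
  using integrable_on_cmult_left[of f S c] by simp

lemma sum_zero_pow: "0 < N \<Longrightarrow> (\<Sum>k<N. g k * (0::real) ^ k) = g 0"
  by (cases N) (simp_all add: sum.lessThan_Suc_shift)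

lemma taylor_bound:
  assumes ps: "schwartz \<psi>"
  shows "\<exists>B. \<forall>c h. \<bar>\<psi> (c + h) - (\<Sum>k<N. (deriv ^^ k) \<psi> c / fact k * h ^ k)\<bar> \<le> B * \<bar>h\<bar> ^ N"
proof -
  obtain B0 where B0: "\<And>x. \<bar>(deriv ^^ N) \<psi> x\<bar> \<le> B0" using schwartz_bounded[OF ps] by blast
  have "\<bar>\<psi> (c + h) - (\<Sum>k<N. (deriv ^^ k) \<psi> c / fact k * h ^ k)\<bar> \<le> B0 / fact N * \<bar>h\<bar> ^ N" for c h
  proof (cases "N = 0")
    case True then show ?thesis using B0[of "c + h"] by simp
  next
    case N: False
    show ?thesis
    proof (cases "h = 0")
      case True
      have s: "(\<Sum>k<N. (deriv ^^ k) \<psi> c / fact k * 0 ^ k) = \<psi> c"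
        using sum_zero_pow[of N "\<lambda>k. (deriv ^^ k) \<psi> c / fact k"] N by simp
      show ?thesis unfolding True add_0_right s using N by (simp add: zero_power)
    next
      case False
      have "\<exists>t. (if c + h < c then c + h < t \<and> t < c else c < t \<and> t < c + h) \<and>
          \<psi> (c + h) = (\<Sum>m<N. (deriv ^^ m) \<psi> c / fact m * (c + h - c) ^ m) +
                   (deriv ^^ N) \<psi> t / fact N * (c + h - c) ^ N"
      proof (rule Taylor[where a = "min c (c + h)" and b = "max c (c + h)"])
        show "0 < N" using N by simp
        show "(deriv ^^ 0) \<psi> = \<psi>" by simp
        show "\<forall>m t. m < N \<and> min c (c + h) \<le> t \<and> t \<le> max c (c + h) \<longrightarrow>
              ((deriv ^^ m) \<psi> has_real_derivative (deriv ^^ Suc m) \<psi> t) (at t)"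
          using schwartz_deriv[OF ps] by blast
      qed (use False in auto)
      then obtain t where t: "\<psi> (c + h) = (\<Sum>m<N. (deriv ^^ m) \<psi> c / fact m * h ^ m) +
                   (deriv ^^ N) \<psi> t / fact N * h ^ N" by auto
      have "\<bar>\<psi> (c + h) - (\<Sum>k<N. (deriv ^^ k) \<psi> c / fact k * h ^ k)\<bar> =
          \<bar>(deriv ^^ N) \<psi> t\<bar> / fact N * \<bar>h\<bar> ^ N"
        unfolding t by (simp add: abs_mult power_abs)
      also have "\<dots> \<le> B0 / fact N * \<bar>h\<bar> ^ N"
        using B0[of t] by (intro mult_right_mono divide_right_mono) auto
      finally show ?thesis .
    qed
  qed
  then show ?thesis by blast
qed

lemma integral_poly_sum:
  assumes g: "\<And>k. good (\<lambda>y. y ^ k * F y)"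
  shows "integral UNIV (\<lambda>y. \<Sum>k<N. c k * (\<epsilon> * y) ^ k * F y) =
         (\<Sum>k<N. c k * integral UNIV (\<lambda>y. y ^ k * F y) * \<epsilon> ^ k)"
proof -
  have "integral UNIV (\<lambda>y. \<Sum>k<N. c k * (\<epsilon> * y) ^ k * F y) =
        integral UNIV (\<lambda>y. \<Sum>k<N. (c k * \<epsilon> ^ k) * (y ^ k * F y))"
    by (simp add: power_mult_distrib mult.assoc mult.left_commute)
  also have "\<dots> = (\<Sum>k<N. integral UNIV (\<lambda>y. (c k * \<epsilon> ^ k) * (y ^ k * F y)))"
    by (rule integral_sum) (auto intro!: int_cmul good_integrable_on[OF _ g])
  also have "\<dots> = (\<Sum>k<N. (c k * \<epsilon> ^ k) * integral UNIV (\<lambda>y. y ^ k * F y))"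
    by (simp only: integral_mult_right)
  also have "\<dots> = (\<Sum>k<N. c k * integral UNIV (\<lambda>y. y ^ k * F y) * \<epsilon> ^ k)"
    by (simp add: mult_ac)
  finally show ?thesis .
qed

lemma expansion_hopf:
  assumes th: "schwartz \<theta>" and ps: "schwartz \<psi>"
  shows "has_asymp_expansion (hopf_pairing (shock_wave \<theta> h0 dh a) \<psi> t)
           (\<lambda>k. (deriv ^^ k) \<psi> (a * t) / fact k * integral UNIV (\<lambda>y. y ^ k * Th \<theta> h0 dh a y))"
  unfolding has_asymp_expansion_def
proof
  fix N
  let ?c = "a * t"
  let ?F = "Th \<theta> h0 dh a"
  let ?P = "\<lambda>\<epsilon> y. \<Sum>k<N. (deriv ^^ k) \<psi> ?c / fact k * (\<epsilon> * y) ^ k * ?F y"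
  obtain B where B: "\<And>c h. \<bar>\<psi> (c + h) - (\<Sum>k<N. (deriv ^^ k) \<psi> c / fact k * h ^ k)\<bar> \<le> B * \<bar>h\<bar> ^ N"
    using taylor_bound[OF ps, of N] by blast
  have gF: "\<And>k. good (\<lambda>y. y ^ k * ?F y)" using Th_good[OF th] .
  have gN: "good (\<lambda>y. \<bar>y ^ N * ?F y\<bar>)" using good_abs[OF gF] .
  define M where "M = integral UNIV (\<lambda>y. \<bar>y ^ N * ?F y\<bar>)"
  obtain Bp where Bp: "\<And>x. \<bar>(deriv ^^ 0) \<psi> x\<bar> \<le> Bp" using schwartz_bounded[OF ps] by blast
  have cps: "continuous_on UNIV \<psi>" using schwartz_good0[OF ps] by (simp add: good_def)
  have bnd: "\<bar>hopf_pairing (shock_wave \<theta> h0 dh a) \<psi> t \<epsilon> -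
      (\<Sum>k<N. (deriv ^^ k) \<psi> ?c / fact k * integral UNIV (\<lambda>y. y ^ k * ?F y) * \<epsilon> ^ k)\<bar>
      \<le> (B * M) * \<epsilon> ^ N" if e: "0 < \<epsilon>" for \<epsilon>
  proof -
    have g1: "good (\<lambda>y. ?F y * \<psi> (?c + \<epsilon> * y))"
    proof (rule good_mult_bounded(2))
      show "good ?F" using gF[of 0] by simp
      show "continuous_on UNIV (\<lambda>y. \<psi> (a * t + \<epsilon> * y))"
        by (rule continuous_on_compose2[OF cps]) (auto intro: continuous_intros)
      show "\<bar>\<psi> (a * t + \<epsilon> * y)\<bar> \<le> Bp" for y using Bp by simp
    qed
    have g2: "?P \<epsilon> integrable_on UNIV"
    proof -
      have "(\<lambda>y. \<Sum>k<N. (deriv ^^ k) \<psi> ?c / fact k * \<epsilon> ^ k * (y ^ k * ?F y)) integrable_on UNIV"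
        by (intro integrable_sum int_cmul good_integrable_on[OF _ gF]) auto
      then show ?thesis by (simp add: power_mult_distrib mult_ac)
    qed
    have g1': "(\<lambda>y. ?F y * \<psi> (?c + \<epsilon> * y)) integrable_on UNIV"
      by (rule good_integrable_on[OF _ g1]) simp
    have "hopf_pairing (shock_wave \<theta> h0 dh a) \<psi> t \<epsilon> -
      (\<Sum>k<N. (deriv ^^ k) \<psi> ?c / fact k * integral UNIV (\<lambda>y. y ^ k * ?F y) * \<epsilon> ^ k) =
      integral UNIV (\<lambda>y. ?F y * \<psi> (?c + \<epsilon> * y)) - integral UNIV (?P \<epsilon>)"
      using pairing_formula[OF th ps e] integral_poly_sum[OF gF, of "\<lambda>k. (deriv ^^ k) \<psi> ?c / fact k" \<epsilon> N]
      by (simp only:)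
    also have "\<dots> = integral UNIV (\<lambda>y. ?F y * \<psi> (?c + \<epsilon> * y) - ?P \<epsilon> y)"
      by (rule integral_diff[symmetric, OF g1' g2])
    finally have eq: "hopf_pairing (shock_wave \<theta> h0 dh a) \<psi> t \<epsilon> -
      (\<Sum>k<N. (deriv ^^ k) \<psi> ?c / fact k * integral UNIV (\<lambda>y. y ^ k * ?F y) * \<epsilon> ^ k) =
      integral UNIV (\<lambda>y. ?F y * \<psi> (?c + \<epsilon> * y) - ?P \<epsilon> y)" .
    have pt: "\<bar>?F y * \<psi> (?c + \<epsilon> * y) - ?P \<epsilon> y\<bar> \<le> (B * \<epsilon> ^ N) * \<bar>y ^ N * ?F y\<bar>" for y
    proof -
      have P: "?P \<epsilon> y = ?F y * (\<Sum>k<N. (deriv ^^ k) \<psi> ?c / fact k * (\<epsilon> * y) ^ k)"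
        unfolding sum_distrib_left by (rule sum.cong) (auto simp: mult_ac)
      have "?F y * \<psi> (?c + \<epsilon> * y) - ?P \<epsilon> y =
          ?F y * (\<psi> (?c + \<epsilon> * y) - (\<Sum>k<N. (deriv ^^ k) \<psi> ?c / fact k * (\<epsilon> * y) ^ k))"
        unfolding P by (simp only: right_diff_distrib)
      then have "\<bar>?F y * \<psi> (?c + \<epsilon> * y) - ?P \<epsilon> y\<bar> =
          \<bar>?F y\<bar> * \<bar>\<psi> (?c + \<epsilon> * y) - (\<Sum>k<N. (deriv ^^ k) \<psi> ?c / fact k * (\<epsilon> * y) ^ k)\<bar>"
        by (simp only: abs_mult)
      also have "\<dots> \<le> \<bar>?F y\<bar> * (B * \<bar>\<epsilon> * y\<bar> ^ N)"
        by (rule mult_left_mono[OF B abs_ge_zero])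
      also have "\<dots> = (B * \<epsilon> ^ N) * \<bar>y ^ N * ?F y\<bar>"
      proof -
        have a1: "\<bar>\<epsilon> * y\<bar> ^ N = \<epsilon> ^ N * \<bar>y\<bar> ^ N" using e by (simp add: abs_mult power_mult_distrib)
        have a2: "\<bar>y ^ N * ?F y\<bar> = \<bar>y\<bar> ^ N * \<bar>?F y\<bar>" by (simp add: abs_mult power_abs)
        show ?thesis unfolding a1 a2 by (simp only: mult_ac)
      qed
      finally show ?thesis .
    qed
    have i1: "(\<lambda>y. ?F y * \<psi> (?c + \<epsilon> * y) - ?P \<epsilon> y) integrable_on UNIV"
      by (rule integrable_diff[OF g1' g2])
    have i2: "(\<lambda>y. B * \<epsilon> ^ N * \<bar>y ^ N * ?F y\<bar>) integrable_on UNIV"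
      by (intro int_cmul good_integrable_on[OF _ gN]) auto
    have "norm (integral UNIV (\<lambda>y. ?F y * \<psi> (?c + \<epsilon> * y) - ?P \<epsilon> y)) \<le>
          integral UNIV (\<lambda>y. (B * \<epsilon> ^ N) * \<bar>y ^ N * ?F y\<bar>)"
      by (rule integral_norm_bound_integral[OF i1 i2]) (simp only: real_norm_def pt)
    then have "\<bar>integral UNIV (\<lambda>y. ?F y * \<psi> (?c + \<epsilon> * y) - ?P \<epsilon> y)\<bar> \<le>
          integral UNIV (\<lambda>y. (B * \<epsilon> ^ N) * \<bar>y ^ N * ?F y\<bar>)" by simp
    also have "\<dots> = (B * M) * \<epsilon> ^ N" by (simp add: M_def integral_mult_right)
    finally show ?thesis using eq by simp
  qed
  show "(\<lambda>\<epsilon>. hopf_pairing (shock_wave \<theta> h0 dh a) \<psi> t \<epsilon> -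
      (\<Sum>k<N. (deriv ^^ k) \<psi> ?c / fact k * integral UNIV (\<lambda>y. y ^ k * ?F y) * \<epsilon> ^ k))
      \<in> O[at_right 0](\<lambda>\<epsilon>. \<epsilon> ^ N)"
    by (rule bigo_from_bound[where C = "B * M"], rule eventually_mono[OF ev_pos], rule bnd)
qed

lemma cls_pow: "cls (\<lambda>x. x ^ k)"
proof (induction k)
  case 0 show ?case using cls_const[of 1] by simp
next
  case (Suc k) show ?case using cls_mult[OF cls_id Suc] by simp
qed

lemma exp_minus_bound: "0 \<le> (u::real) \<Longrightarrow> \<bar>exp (- u) - 1\<bar> \<le> u"
proof -
  assume u: "0 \<le> u"
  have "1 + (- u) \<le> exp (- u)" using exp_ge_add_one_self[of "- u"] by simp
  moreover have "exp (- u) \<le> 1" using u by simp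
  ultimately show ?thesis by linarith
qed

lemma coeff_vanish:
  assumes th: "schwartz \<theta>" and T: "0 \<le> T"
    and hs: "hopf_solution_upto (shock_wave \<theta> h0 dh a) T l" and k: "k < l"
  shows "integral UNIV (\<lambda>y. y ^ k * Th \<theta> h0 dh a y) = 0"
proof -
  let ?F = "Th \<theta> h0 dh a"
  define \<psi> where "\<psi> = (\<lambda>x::real. exp (- 1 * x\<^sup>2) * x ^ k)"
  have ps: "schwartz \<psi>" unfolding \<psi>_def by (intro dcls_schwartz dclsI cls_pow) simp
  obtain \<xi> where ex: "has_asymp_expansion (hopf_pairing (shock_wave \<theta> h0 dh a) \<psi> 0) \<xi>"
    and z: "\<And>j. j < l \<Longrightarrow> \<xi> j = 0"
    using hs ps T unfolding hopf_solution_upto_def by fastforce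
  define I where "I = hopf_pairing (shock_wave \<theta> h0 dh a) \<psi> 0"
  have "(\<lambda>\<epsilon>. I \<epsilon> - (\<Sum>j<Suc k. \<xi> j * \<epsilon> ^ j)) \<in> O[at_right 0](\<lambda>\<epsilon>. \<epsilon> ^ Suc k)"
    using ex unfolding has_asymp_expansion_def I_def by blast
  moreover have "(\<Sum>j<Suc k. \<xi> j * \<epsilon> ^ j) = 0" for \<epsilon> :: real
    using z k by (intro sum.neutral) auto
  ultimately have IO: "I \<in> O[at_right 0](\<lambda>\<epsilon>. \<epsilon> ^ Suc k)" by simp
  define J where "J \<epsilon> = integral UNIV (\<lambda>y. (y ^ k * ?F y) * exp (- 1 * (\<epsilon> * y)\<^sup>2))" for \<epsilon>
  define L where "L = integral UNIV (\<lambda>y. y ^ k * ?F y)"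
  have gF: "\<And>k. good (\<lambda>y. y ^ k * ?F y)" using Th_good[OF th] .
  have IJ: "I \<epsilon> = \<epsilon> ^ k * J \<epsilon>" if e: "0 < \<epsilon>" for \<epsilon>
  proof -
    have "I \<epsilon> = integral UNIV (\<lambda>y. ?F y * \<psi> (a * 0 + \<epsilon> * y))"
      unfolding I_def by (rule pairing_formula[OF th ps e])
    also have "\<dots> = integral UNIV (\<lambda>y. \<epsilon> ^ k * ((y ^ k * ?F y) * exp (- 1 * (\<epsilon> * y)\<^sup>2)))"
      unfolding \<psi>_def by (simp add: power_mult_distrib mult_ac)
    also have "\<dots> = \<epsilon> ^ k * J \<epsilon>" unfolding J_def by (rule integral_mult_right)
    finally show ?thesis .
  qed
  obtain C where C: "0 < C" "eventually (\<lambda>\<epsilon>. norm (I \<epsilon>) \<le> C * norm (\<epsilon> ^ Suc k)) (at_right 0)"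
    using IO by (elim landau_o.bigE) blast
  have "eventually (\<lambda>\<epsilon>. norm (J \<epsilon>) \<le> C * \<epsilon>) (at_right 0)"
    using C(2) ev_pos
  proof eventually_elim
    case (elim \<epsilon>)
    then have "\<epsilon> ^ k * \<bar>J \<epsilon>\<bar> \<le> \<epsilon> ^ k * (C * \<epsilon>)"
      using IJ[of \<epsilon>] by (simp add: abs_mult mult_ac)
    then show ?case using elim(2) by simp
  qed
  moreover have "((\<lambda>\<epsilon>. C * \<epsilon>) \<longlongrightarrow> 0) (at_right (0::real))"
    using tendsto_mult[OF tendsto_const[of C] tendsto_ident_at[of "0::real" "{0<..}"]] by simp
  ultimately have J0: "(J \<longlongrightarrow> 0) (at_right 0)" by (metis Lim_null_comparison)
  define M2 where "M2 = integral UNIV (\<lambda>y. \<bar>y ^ (k + 2) * ?F y\<bar>)"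
  have bJ: "\<bar>J \<epsilon> - L\<bar> \<le> M2 * \<epsilon>\<^sup>2" for \<epsilon>
  proof -
    have cexp: "continuous_on UNIV (\<lambda>y. exp (- 1 * (\<epsilon> * y)\<^sup>2))" by (intro continuous_intros)
    have g1: "good (\<lambda>y. (y ^ k * ?F y) * exp (- 1 * (\<epsilon> * y)\<^sup>2))"
      by (rule good_mult_bounded(2)[OF gF cexp, of 1]) simp
    have i1: "(\<lambda>y. (y ^ k * ?F y) * exp (- 1 * (\<epsilon> * y)\<^sup>2)) integrable_on UNIV"
      by (rule good_integrable_on[OF _ g1]) simp
    have i0: "(\<lambda>y. y ^ k * ?F y) integrable_on UNIV"
      by (rule good_integrable_on[OF _ gF]) simp
    have i2: "(\<lambda>y. \<epsilon>\<^sup>2 * \<bar>y ^ (k + 2) * ?F y\<bar>) integrable_on UNIV"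
      by (intro int_cmul good_integrable_on[OF _ good_abs[OF gF]]) simp
    have "J \<epsilon> - L = integral UNIV (\<lambda>y. (y ^ k * ?F y) * exp (- 1 * (\<epsilon> * y)\<^sup>2) - y ^ k * ?F y)"
      unfolding J_def L_def by (rule integral_diff[symmetric, OF i1 i0])
    moreover have "norm (integral UNIV (\<lambda>y. (y ^ k * ?F y) * exp (- 1 * (\<epsilon> * y)\<^sup>2) - y ^ k * ?F y))
        \<le> integral UNIV (\<lambda>y. \<epsilon>\<^sup>2 * \<bar>y ^ (k + 2) * ?F y\<bar>)"
    proof (rule integral_norm_bound_integral[OF integrable_diff[OF i1 i0] i2])
      fix y :: real
      have "(y ^ k * ?F y) * exp (- 1 * (\<epsilon> * y)\<^sup>2) - y ^ k * ?F y =
          (y ^ k * ?F y) * (exp (- ((\<epsilon> * y)\<^sup>2)) - 1)" by (simp add: algebra_simps)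
      then have "norm ((y ^ k * ?F y) * exp (- 1 * (\<epsilon> * y)\<^sup>2) - y ^ k * ?F y) =
          \<bar>y ^ k * ?F y\<bar> * \<bar>exp (- ((\<epsilon> * y)\<^sup>2)) - 1\<bar>" by (simp add: abs_mult)
      also have "\<dots> \<le> \<bar>y ^ k * ?F y\<bar> * (\<epsilon> * y)\<^sup>2"
        by (intro mult_left_mono exp_minus_bound) auto
      also have "\<dots> = \<epsilon>\<^sup>2 * \<bar>y ^ (k + 2) * ?F y\<bar>"
        by (simp add: abs_mult power_add power_mult_distrib power2_eq_square mult_ac)
      finally show "norm ((y ^ k * ?F y) * exp (- 1 * (\<epsilon> * y)\<^sup>2) - y ^ k * ?F y)
          \<le> \<epsilon>\<^sup>2 * \<bar>y ^ (k + 2) * ?F y\<bar>" .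
    qed
    ultimately show ?thesis
      unfolding M2_def by (simp add: integral_mult_right mult.commute)
  qed
  have "((\<lambda>\<epsilon>. J \<epsilon> - L) \<longlongrightarrow> 0) (at_right (0::real))"
  proof (rule Lim_null_comparison)
    show "eventually (\<lambda>\<epsilon>. norm (J \<epsilon> - L) \<le> M2 * \<epsilon>\<^sup>2) (at_right 0)"
      using bJ by simp
    show "((\<lambda>\<epsilon>. M2 * \<epsilon>\<^sup>2) \<longlongrightarrow> 0) (at_right (0::real))"
      using tendsto_mult[OF tendsto_const[of M2] tendsto_power[OF tendsto_ident_at[of "0::real" "{0<..}"], of 2]]
      by simp
  qed
  then have JL: "(J \<longlongrightarrow> L) (at_right 0)" by (simp add: LIM_zero_iff)
  have "L = 0" using tendsto_unique[OF _ JL J0] by simp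
  then show ?thesis unfolding L_def .
qed

lemma int_theta_K:
  assumes th: "schwartz \<theta>" and i: "(\<theta> has_integral 1) UNIV"
  shows "integral UNIV (\<lambda>x. \<theta> x * Kfun \<theta> x) = 1/2"
proof -
  have g: "good \<theta>" using schwartz_good0[OF th] .
  have gK: "good (\<lambda>x. \<theta> x * Kfun \<theta> x)"
    by (rule good_mult_bounded(2)[OF g K_continuous[OF g] K_bounded[OF g]])
  have "((\<lambda>x. \<theta> x * Kfun \<theta> x) has_integral (1/2 - 0)) UNIV"
  proof (rule FTC_R[where F = "\<lambda>x. (Kfun \<theta> x)\<^sup>2 / 2"])
    fix x
    show "((\<lambda>x. (Kfun \<theta> x)\<^sup>2 / 2) has_real_derivative \<theta> x * Kfun \<theta> x) (at x)"
      using K_deriv[OF g, of x] by (auto intro!: derivative_eq_intros)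
  next
    show "continuous_on UNIV (\<lambda>x. \<theta> x * Kfun \<theta> x)" using gK by (simp add: good_def)
    show "integrable lborel (\<lambda>x. \<theta> x * Kfun \<theta> x)" using good_integrable[OF gK] .
    show "((\<lambda>x. (Kfun \<theta> x)\<^sup>2 / 2) \<longlongrightarrow> 0) at_bot"
      using tendsto_divide[OF tendsto_power[OF K_bot[OF g], of 2] tendsto_const[of 2]] by simp
    have "integral UNIV \<theta> = 1" using i by (rule integral_unique)
    then show "((\<lambda>x. (Kfun \<theta> x)\<^sup>2 / 2) \<longlongrightarrow> 1/2) at_top"
      using tendsto_divide[OF tendsto_power[OF K_top[OF g], of 2] tendsto_const[of 2]] by simp
  qed
  then show ?thesis by (simp add: integral_unique)
qed

lemma Th_moment:
  assumes th: "schwartz \<theta>"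
  shows "integral UNIV (\<lambda>y. y ^ k * Th \<theta> h0 dh a y) =
     dh * (h0 - a) * integral UNIV (\<lambda>y. y ^ k * \<theta> y) + dh\<^sup>2 * integral UNIV (\<lambda>y. y ^ k * \<theta> y * Kfun \<theta> y)"
proof -
  have g: "good \<theta>" using schwartz_good0[OF th] .
  have gK: "good (\<lambda>x. \<theta> x * Kfun \<theta> x)"
    by (rule good_mult_bounded(2)[OF g K_continuous[OF g] K_bounded[OF g]])
  have i1: "(\<lambda>y. dh * (h0 - a) * (y ^ k * \<theta> y)) integrable_on UNIV"
    by (intro int_cmul good_integrable_on[OF _ good_poly[OF g]]) simp
  have i2: "(\<lambda>y. dh\<^sup>2 * (y ^ k * (\<theta> y * Kfun \<theta> y))) integrable_on UNIV"
    by (intro int_cmul good_integrable_on[OF _ good_poly[OF gK]]) simp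
  have "integral UNIV (\<lambda>y. y ^ k * Th \<theta> h0 dh a y) =
      integral UNIV (\<lambda>y. dh * (h0 - a) * (y ^ k * \<theta> y) + dh\<^sup>2 * (y ^ k * (\<theta> y * Kfun \<theta> y)))"
    unfolding Th_def by (simp add: algebra_simps power2_eq_square)
  also have "\<dots> = integral UNIV (\<lambda>y. dh * (h0 - a) * (y ^ k * \<theta> y)) +
      integral UNIV (\<lambda>y. dh\<^sup>2 * (y ^ k * (\<theta> y * Kfun \<theta> y)))"
    by (rule integral_add[OF i1 i2])
  also have "\<dots> = dh * (h0 - a) * integral UNIV (\<lambda>y. y ^ k * \<theta> y) +
      dh\<^sup>2 * integral UNIV (\<lambda>y. y ^ k * \<theta> y * Kfun \<theta> y)"
    by (simp add: integral_mult_right mult.assoc)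
  finally show ?thesis .
qed

lemma partB:
  assumes th: "schwartz \<theta>" and T: "0 \<le> T"
  shows "(\<forall>h0 dh. dh \<noteq> 0 \<longrightarrow> hopf_solution_upto (shock_wave \<theta> h0 dh (h0 + dh / 2)) T l)
     \<longleftrightarrow> (\<forall>k<l. (1/2) * integral UNIV (\<lambda>x. x ^ k * \<theta> x)
                     = integral UNIV (\<lambda>x. x ^ k * \<theta> x * Kfun \<theta> x))"
proof
  assume H: "\<forall>h0 dh. dh \<noteq> 0 \<longrightarrow> hopf_solution_upto (shock_wave \<theta> h0 dh (h0 + dh / 2)) T l"
  show "\<forall>k<l. (1/2) * integral UNIV (\<lambda>x. x ^ k * \<theta> x) = integral UNIV (\<lambda>x. x ^ k * \<theta> x * Kfun \<theta> x)"
  proof (intro allI impI)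
    fix k assume k: "k < l"
    have "hopf_solution_upto (shock_wave \<theta> 0 1 (0 + 1 / 2)) T l" using H[rule_format, of 1 0] by simp
    from coeff_vanish[OF th T this k] Th_moment[OF th, of k 0 1 "0 + 1/2"]
    show "(1/2) * integral UNIV (\<lambda>x. x ^ k * \<theta> x) = integral UNIV (\<lambda>x. x ^ k * \<theta> x * Kfun \<theta> x)"
      by simp
  qed
next
  assume H: "\<forall>k<l. (1/2) * integral UNIV (\<lambda>x. x ^ k * \<theta> x) = integral UNIV (\<lambda>x. x ^ k * \<theta> x * Kfun \<theta> x)"
  show "\<forall>h0 dh. dh \<noteq> 0 \<longrightarrow> hopf_solution_upto (shock_wave \<theta> h0 dh (h0 + dh / 2)) T l"
    unfolding hopf_solution_upto_def
  proof (intro allI impI ballI)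
    fix h0 dh t :: real and \<psi> assume ps: "schwartz \<psi>"
    let ?a = "h0 + dh / 2"
    show "\<exists>\<xi>. has_asymp_expansion (hopf_pairing (shock_wave \<theta> h0 dh ?a) \<psi> t) \<xi> \<and> (\<forall>k<l. \<xi> k = 0)"
    proof (intro exI conjI allI impI)
      show "has_asymp_expansion (hopf_pairing (shock_wave \<theta> h0 dh ?a) \<psi> t)
           (\<lambda>k. (deriv ^^ k) \<psi> (?a * t) / fact k * integral UNIV (\<lambda>y. y ^ k * Th \<theta> h0 dh ?a y))"
        by (rule expansion_hopf[OF th ps])
      fix k assume k: "k < l"
      have "integral UNIV (\<lambda>y. y ^ k * Th \<theta> h0 dh ?a y) = 0"
        using Th_moment[OF th, of k h0 dh ?a] H k by (simp add: power2_eq_square algebra_simps)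
      then show "(deriv ^^ k) \<psi> (?a * t) / fact k * integral UNIV (\<lambda>y. y ^ k * Th \<theta> h0 dh ?a y) = 0"
        by simp
    qed
  qed
qed

lemma partC:
  assumes th: "schwartz \<theta>" and i: "(\<theta> has_integral 1) UNIV" and dh: "dh \<noteq> 0" and T: "0 \<le> T"
    and hs: "hopf_solution_upto (shock_wave \<theta> h0 dh a) T l" and l: "1 \<le> l"
  shows "(a - h0) / dh = 1/2"
proof -
  have A: "integral UNIV (\<lambda>y. y ^ 0 * Th \<theta> h0 dh a y) = 0"
    using coeff_vanish[OF th T hs, of 0] l by simp
  have B: "integral UNIV (\<lambda>y. y ^ 0 * \<theta> y) = 1" using i by (simp add: integral_unique)
  have C: "integral UNIV (\<lambda>y. y ^ 0 * \<theta> y * Kfun \<theta> y) = 1/2" using int_theta_K[OF th i] by simp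
  have m: "integral UNIV (\<lambda>y. y ^ 0 * Th \<theta> h0 dh a y) = dh * (h0 - a) * integral UNIV (\<lambda>y. y ^ 0 * \<theta> y)
     + dh\<^sup>2 * integral UNIV (\<lambda>y. y ^ 0 * \<theta> y * Kfun \<theta> y)" by (rule Th_moment[OF th])
  then have "0 = dh * (h0 - a) * 1 + dh\<^sup>2 * (1/2)" unfolding A B C .
  then have "dh * ((h0 - a) + dh / 2) = 0" by (simp add: power2_eq_square algebra_simps)
  then have "h0 - a + dh / 2 = 0" using dh by simp
  then show ?thesis using dh by (simp add: field_simps)
qed

lemma dcls_cls: "dcls f \<Longrightarrow> cls f"
proof -
  assume "dcls f"
  then obtain a g where h: "0 < a" "cls g" "f = (\<lambda>x. exp (- a * x\<^sup>2) * g x)"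
    unfolding dcls_def by blast
  have "cls (\<lambda>x. exp (- a * x\<^sup>2 + 0 * x) * g x)" using h by (intro cls.intros)
  then show ?thesis using h(3) by simp
qed

lemma dcls_cmult: "dcls f \<Longrightarrow> dcls (\<lambda>x. c * f x)"
  using dcls_mult(2)[OF _ cls_const] by blast

lemma dcls_sum: "finite S \<Longrightarrow> S \<noteq> {} \<Longrightarrow> (\<And>j. j \<in> S \<Longrightarrow> dcls (f j)) \<Longrightarrow> dcls (\<lambda>x. \<Sum>j\<in>S. f j x)"
proof (induction S rule: finite_ne_induct)
  case (singleton x) then show ?case by simp
next
  case (insert x F) then show ?case by (simp add: dcls_add)
qed

lemma dcls_poly: "dcls f \<Longrightarrow> dcls (\<lambda>x. x ^ k * f x)"
  using dcls_mult(2)[OF _ cls_pow] by blast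

lemma dcls_D: "dcls f \<Longrightarrow> ((deriv ^^ q) f has_real_derivative (deriv ^^ Suc q) f y) (at y)"
  using dcls_differentiable[OF dcls_funpow] by (simp add: DERIV_deriv_iff_real_differentiable)

lemma ibp:
  assumes f: "dcls f"
  shows "integral UNIV (\<lambda>y. y ^ m * (deriv ^^ Suc q) f y) =
         - real m * integral UNIV (\<lambda>y. y ^ (m - 1) * (deriv ^^ q) f y)"
proof -
  let ?D = "\<lambda>q. (deriv ^^ q) f"
  have d: "\<And>q. dcls (?D q)" using dcls_funpow[OF f] .
  have g1: "good (\<lambda>y. real m * (y ^ (m - 1) * ?D q y))"
    by (intro good_cmult dcls_good dcls_poly d)
  have g2: "good (\<lambda>y. y ^ m * ?D (Suc q) y)" by (intro dcls_good dcls_poly d)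
  have "((\<lambda>y. real m * (y ^ (m - 1) * ?D q y) + y ^ m * ?D (Suc q) y) has_integral (0 - 0)) UNIV"
  proof (rule FTC_R[where F = "\<lambda>y. y ^ m * ?D q y"])
    fix x
    show "((\<lambda>y. y ^ m * ?D q y) has_real_derivative real m * (x ^ (m - 1) * ?D q x) + x ^ m * ?D (Suc q) x) (at x)"
      using DERIV_mult[OF DERIV_pow[of m x] dcls_D[OF f, of q x]] by (simp add: algebra_simps)
  next
    have g: "good (\<lambda>y. real m * (y ^ (m - 1) * ?D q y) + y ^ m * ?D (Suc q) y)"
      by (rule good_add[OF g1 g2])
    then show "continuous_on UNIV (\<lambda>y. real m * (y ^ (m - 1) * ?D q y) + y ^ m * ?D (Suc q) y)"
      by (simp add: good_def)
    show "integrable lborel (\<lambda>y. real m * (y ^ (m - 1) * ?D q y) + y ^ m * ?D (Suc q) y)"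
      using good_integrable[OF g] .
    have "decays (\<lambda>y. y ^ m * ?D q y)" using dcls_decays[OF dcls_poly[OF d]] .
    then show "((\<lambda>y. y ^ m * ?D q y) \<longlongrightarrow> 0) at_bot" "((\<lambda>y. y ^ m * ?D q y) \<longlongrightarrow> 0) at_top"
      using decays_tendsto by auto
  qed
  then have "integral UNIV (\<lambda>y. real m * (y ^ (m - 1) * ?D q y) + y ^ m * ?D (Suc q) y) = 0"
    by (simp add: integral_unique)
  moreover have "integral UNIV (\<lambda>y. real m * (y ^ (m - 1) * ?D q y) + y ^ m * ?D (Suc q) y) =
      real m * integral UNIV (\<lambda>y. y ^ (m - 1) * ?D q y) + integral UNIV (\<lambda>y. y ^ m * ?D (Suc q) y)"
  proof -
    have i1: "(\<lambda>y. real m * (y ^ (m - 1) * ?D q y)) integrable_on UNIV" by (rule good_integrable_on[OF _ g1]) simp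
    have i2: "(\<lambda>y. y ^ m * ?D (Suc q) y) integrable_on UNIV" by (rule good_integrable_on[OF _ g2]) simp
    show ?thesis by (simp only: integral_add[OF i1 i2] integral_mult_right)
  qed
  ultimately show ?thesis by linarith
qed

lemma mom_zero:
  assumes f: "dcls f" shows "m < p \<Longrightarrow> integral UNIV (\<lambda>y. y ^ m * (deriv ^^ p) f y) = 0"
proof (induction m arbitrary: p)
  case 0
  then obtain q where "p = Suc q" by (cases p) auto
  then show ?case using ibp[OF f, of 0 q] by simp
next
  case (Suc m)
  then obtain q where q: "p = Suc q" "m < q" by (cases p) auto
  then show ?case using ibp[OF f, of "Suc m" q] Suc.IH[OF q(2)] by simp
qed

lemma mom_diag:
  assumes f: "dcls f"
  shows "integral UNIV (\<lambda>y. y ^ m * (deriv ^^ m) f y) = (- 1) ^ m * fact m * integral UNIV f"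
proof (induction m)
  case 0 then show ?case by simp
next
  case (Suc m)
  show ?case using ibp[OF f, of "Suc m" m] Suc.IH by (simp add: algebra_simps)
qed

lemma gauss_pos: "0 < integral UNIV (\<lambda>y::real. exp (- 1 * y\<^sup>2) * 1)"
proof -
  let ?g = "\<lambda>y::real. exp (- 1 * y\<^sup>2) * 1"
  have dg: "dcls ?g" by (intro dclsI cls_const) simp
  have gg: "good ?g" using dcls_good[OF dg] .
  have "integral {-1..1} (\<lambda>y::real. exp (- 1)) \<le> integral {-1..1} ?g"
  proof (rule integral_le)
    show "(\<lambda>y::real. exp (- 1)) integrable_on {-1..1}"
      by (rule integrable_continuous_interval) (rule continuous_on_const)
    show "?g integrable_on {-1..1}" by (rule good_integrable_on[OF _ gg]) simp
    fix y :: real assume "y \<in> {-1..1}"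
    then have "y\<^sup>2 \<le> 1" by (simp add: abs_square_le_1 abs_le_iff)
    then show "exp (- 1) \<le> ?g y" by simp
  qed
  moreover have "integral {-1..1} (\<lambda>y::real. exp (- 1)) = (2::real) * exp (- 1)" by simp
  moreover have "integral {-1..1} ?g \<le> integral UNIV ?g"
  proof (rule integral_subset_le)
    show "?g integrable_on {-1..1}" by (rule good_integrable_on[OF _ gg]) simp
    show "?g integrable_on UNIV" by (rule good_integrable_on[OF _ gg]) simp
  qed auto
  ultimately show ?thesis using exp_gt_zero[of "-1::real"] by linarith
qed

lemma tri_solve:
  fixes m :: "nat \<Rightarrow> nat \<Rightarrow> real"
  assumes diag: "\<And>i. m i i \<noteq> 0"
  shows "\<exists>B\<ge>0. \<forall>r. \<exists>c. (\<forall>i\<le>L. (\<Sum>j\<le>i. c j * m i j) = r i) \<and>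
             (\<forall>j\<le>L. \<bar>c j\<bar> \<le> B * (\<Sum>i\<le>L. \<bar>r i\<bar>))"
proof (induction L)
  case 0
  have "\<exists>c. (\<forall>i\<le>0. (\<Sum>j\<le>i. c j * m i j) = r i) \<and> (\<forall>j\<le>0. \<bar>c j\<bar> \<le> 1 / \<bar>m 0 0\<bar> * (\<Sum>i\<le>0. \<bar>r i\<bar>))"
    for r :: "nat \<Rightarrow> real"
    using diag[of 0] by (intro exI[of _ "\<lambda>j. r 0 / m 0 0"]) (auto simp: abs_divide)
  moreover have "0 \<le> 1 / \<bar>m 0 0\<bar>" by simp
  ultimately show ?case by blast
next
  case (Suc L)
  then obtain B where B0: "0 \<le> B" and B: "\<And>r. \<exists>c. (\<forall>i\<le>L. (\<Sum>j\<le>i. c j * m i j) = r i) \<and>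
             (\<forall>j\<le>L. \<bar>c j\<bar> \<le> B * (\<Sum>i\<le>L. \<bar>r i\<bar>))" by blast
  define d where "d = m (Suc L) (Suc L)"
  define B' where "B' = max B ((1 + B * (\<Sum>j\<le>L. \<bar>m (Suc L) j\<bar>)) / \<bar>d\<bar>)"
  have d0: "d \<noteq> 0" using diag by (simp add: d_def)
  have B'0: "0 \<le> B'" using B0 by (simp add: B'_def)
  have "\<exists>c. (\<forall>i\<le>Suc L. (\<Sum>j\<le>i. c j * m i j) = r i) \<and> (\<forall>j\<le>Suc L. \<bar>c j\<bar> \<le> B' * (\<Sum>i\<le>Suc L. \<bar>r i\<bar>))"
    for r :: "nat \<Rightarrow> real"
  proof -
    obtain c where c1: "\<And>i. i \<le> L \<Longrightarrow> (\<Sum>j\<le>i. c j * m i j) = r i"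
      and c2: "\<And>j. j \<le> L \<Longrightarrow> \<bar>c j\<bar> \<le> B * (\<Sum>i\<le>L. \<bar>r i\<bar>)" using B[of r] by blast
    define S where "S = (\<Sum>i\<le>Suc L. \<bar>r i\<bar>)"
    have SS: "(\<Sum>i\<le>L. \<bar>r i\<bar>) \<le> S" unfolding S_def by simp
    have S0: "0 \<le> (\<Sum>i\<le>L. \<bar>r i\<bar>)" by (intro sum_nonneg) auto
    define cL where "cL = (r (Suc L) - (\<Sum>j\<le>L. c j * m (Suc L) j)) / d"
    define c' where "c' = c(Suc L := cL)"
    have c'le: "c' j = c j" if "j \<le> L" for j using that by (simp add: c'_def)
    show "\<exists>c. (\<forall>i\<le>Suc L. (\<Sum>j\<le>i. c j * m i j) = r i) \<and> (\<forall>j\<le>Suc L. \<bar>c j\<bar> \<le> B' * (\<Sum>i\<le>Suc L. \<bar>r i\<bar>))"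
      unfolding S_def[symmetric]
    proof (intro exI[of _ c'] conjI allI impI)
      fix i assume i: "i \<le> Suc L"
      show "(\<Sum>j\<le>i. c' j * m i j) = r i"
      proof (cases "i = Suc L")
        case True
        have "(\<Sum>j\<le>Suc L. c' j * m (Suc L) j) = (\<Sum>j\<le>L. c j * m (Suc L) j) + cL * d"
          by (simp add: c'_def d_def)
        also have "\<dots> = r (Suc L)" using d0 by (simp add: cL_def)
        finally show ?thesis using True by simp
      next
        case False
        then have "i \<le> L" using i by simp
        then have "(\<Sum>j\<le>i. c' j * m i j) = (\<Sum>j\<le>i. c j * m i j)"
          by (intro sum.cong) (auto simp: c'le)
        then show ?thesis using c1 \<open>i \<le> L\<close> by simp
      qed
    next
      fix j assume j: "j \<le> Suc L"
      have BB: "B \<le> B'" by (simp add: B'_def)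
      have S0': "0 \<le> S" unfolding S_def by (intro sum_nonneg) auto
      show "\<bar>c' j\<bar> \<le> B' * S"
      proof (cases "j = Suc L")
        case False
        then have "j \<le> L" using j by simp
        then have "\<bar>c' j\<bar> \<le> B * (\<Sum>i\<le>L. \<bar>r i\<bar>)" using c2 c'le by simp
        also have "\<dots> \<le> B' * S" using BB SS B0 S0 by (intro mult_mono) auto
        finally show ?thesis .
      next
        case True
        have "\<bar>r (Suc L) - (\<Sum>j\<le>L. c j * m (Suc L) j)\<bar> \<le> \<bar>r (Suc L)\<bar> + (\<Sum>j\<le>L. \<bar>c j\<bar> * \<bar>m (Suc L) j\<bar>)"
        proof -
          have "\<bar>(\<Sum>j\<le>L. c j * m (Suc L) j)\<bar> \<le> (\<Sum>j\<le>L. \<bar>c j * m (Suc L) j\<bar>)" by (rule sum_abs)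
          also have "\<dots> = (\<Sum>j\<le>L. \<bar>c j\<bar> * \<bar>m (Suc L) j\<bar>)" by (simp add: abs_mult)
          finally show ?thesis using abs_triangle_ineq4[of "r (Suc L)" "\<Sum>j\<le>L. c j * m (Suc L) j"] by linarith
        qed
        also have "\<dots> \<le> S + (\<Sum>j\<le>L. (B * S) * \<bar>m (Suc L) j\<bar>)"
        proof (intro add_mono sum_mono mult_right_mono)
          show "\<bar>r (Suc L)\<bar> \<le> S" unfolding S_def
            by (rule member_le_sum) auto
          fix j assume "j \<in> {..L}"
          then show "\<bar>c j\<bar> \<le> B * S" using c2[of j] mult_left_mono[OF SS B0] by simp
        qed simp
        also have "\<dots> = (1 + B * (\<Sum>j\<le>L. \<bar>m (Suc L) j\<bar>)) * S"
          by (simp add: sum_distrib_left algebra_simps)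
        finally have "\<bar>cL\<bar> \<le> (1 + B * (\<Sum>j\<le>L. \<bar>m (Suc L) j\<bar>)) * S / \<bar>d\<bar>"
          unfolding cL_def abs_divide using d0 by (simp add: divide_right_mono)
        also have "\<dots> = ((1 + B * (\<Sum>j\<le>L. \<bar>m (Suc L) j\<bar>)) / \<bar>d\<bar>) * S" by simp
        also have "\<dots> \<le> B' * S" using S0' by (intro mult_right_mono) (auto simp: B'_def)
        finally show ?thesis using True by (simp add: c'_def)
      qed
    qed
  qed
  then show ?case using B'0 by blast
qed

lemma A_deriv_gen:
  assumes F: "(F has_real_derivative F') (at y)" and Q: "(Q has_real_derivative Q') (at y)"
    and Fp: "0 < F y" and Qp: "0 < Q y"
  shows "((\<lambda>y. 1/2 * y * F y * (1 / sqrt (F y)) * (1 / sqrt (Q y))) has_real_derivative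
     1/2 * F y * (1 / sqrt (F y)) * (1 / sqrt (Q y)) ^ 3 * (Q y - 1/2 * y * Q') +
     1/4 * y * F' * (1 / sqrt (F y)) * (1 / sqrt (Q y))) (at y)"
proof -
  define S where "S = sqrt (F y)"
  define R where "R = sqrt (Q y)"
  have S: "0 < S" "S\<^sup>2 = F y" using Fp by (auto simp: S_def)
  have R: "0 < R" "R\<^sup>2 = Q y" using Qp by (auto simp: R_def)
  show ?thesis
    using F Q Fp Qp
    apply (auto intro!: derivative_eq_intros)
    apply (unfold S_def[symmetric] R_def[symmetric])
    apply (unfold S(2)[symmetric] R(2)[symmetric])
    using S(1) R(1) apply (simp add: field_simps power2_eq_square power3_eq_cube)
    done
qed


definition g0 :: "real \<Rightarrow> real" where "g0 y = exp (- 1 * y\<^sup>2) * 1"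
definition phi :: "nat \<Rightarrow> real \<Rightarrow> real" where "phi j = (deriv ^^ (j + 2)) g0"
definition phi1 :: "nat \<Rightarrow> real \<Rightarrow> real" where "phi1 j = (deriv ^^ (Suc (j + 2))) g0"
definition rho :: "(nat \<Rightarrow> real) \<Rightarrow> nat \<Rightarrow> real \<Rightarrow> real" where
  "rho c L y = (\<Sum>j\<le>L. c j * phi j y)"
definition rho1 :: "(nat \<Rightarrow> real) \<Rightarrow> nat \<Rightarrow> real \<Rightarrow> real" where
  "rho1 c L y = (\<Sum>j\<le>L. c j * phi1 j y)"
definition Qf :: "real \<Rightarrow> real \<Rightarrow> real" where
  "Qf lam y = lam\<^sup>2 * y\<^sup>2 + exp (- (lam\<^sup>2) * y\<^sup>2)"
definition Q1 :: "real \<Rightarrow> real \<Rightarrow> real" where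
  "Q1 lam y = 2 * lam\<^sup>2 * y - 2 * lam\<^sup>2 * y * exp (- (lam\<^sup>2) * y\<^sup>2)"
definition Ff :: "real \<Rightarrow> (nat \<Rightarrow> real) \<Rightarrow> nat \<Rightarrow> real \<Rightarrow> real" where
  "Ff lam c L y = lam\<^sup>2 + rho c L y * Qf lam y"
definition F1 :: "real \<Rightarrow> (nat \<Rightarrow> real) \<Rightarrow> nat \<Rightarrow> real \<Rightarrow> real" where
  "F1 lam c L y = rho1 c L y * Qf lam y + rho c L y * Q1 lam y"
definition Af :: "real \<Rightarrow> (nat \<Rightarrow> real) \<Rightarrow> nat \<Rightarrow> real \<Rightarrow> real" where
  "Af lam c L y = 1/2 * y * Ff lam c L y * (1 / sqrt (Ff lam c L y)) * (1 / sqrt (Qf lam y))"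
definition thf :: "real \<Rightarrow> (nat \<Rightarrow> real) \<Rightarrow> nat \<Rightarrow> real \<Rightarrow> real" where
  "thf lam c L y = 1/2 * Ff lam c L y * (1 / sqrt (Ff lam c L y)) * (1 / sqrt (Qf lam y)) ^ 3 *
      (Qf lam y - 1/2 * y * Q1 lam y) +
     1/4 * y * F1 lam c L y * (1 / sqrt (Ff lam c L y)) * (1 / sqrt (Qf lam y))"
definition AQ :: "real \<Rightarrow> (nat \<Rightarrow> real) \<Rightarrow> nat \<Rightarrow> real \<Rightarrow> real" where
  "AQ lam c L y = 1/4 * (y ^ 2 * rho c L y - exp (- (lam\<^sup>2) * y\<^sup>2) * ((1 / sqrt (Qf lam y)) * (1 / sqrt (Qf lam y))))"
definition Hf :: "real \<Rightarrow> real" where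
  "Hf z = exp (- 1 * z\<^sup>2) * ((1 / sqrt (Qf 1 z)) * (1 / sqrt (Qf 1 z)))"
definition rr :: "real \<Rightarrow> nat \<Rightarrow> real" where
  "rr lam i = integral UNIV (\<lambda>y. y ^ i * Hf (lam * y))"
definition mm :: "nat \<Rightarrow> nat \<Rightarrow> real" where
  "mm i j = integral UNIV (\<lambda>y. y ^ (i + 2) * phi j y)"

lemma g0_dcls: "dcls g0"
  unfolding g0_def[abs_def] by (intro dclsI cls_const) simp

lemma phi_dcls: "dcls (phi j)" unfolding phi_def by (rule dcls_funpow[OF g0_dcls])
lemma phi1_dcls: "dcls (phi1 j)" unfolding phi1_def by (rule dcls_funpow[OF g0_dcls])

lemma phi_deriv: "(phi j has_real_derivative phi1 j y) (at y)"
  unfolding phi_def phi1_def by (rule dcls_D[OF g0_dcls])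

lemma rho_dcls: "dcls (rho c L)"
  unfolding rho_def[abs_def] by (intro dcls_sum dcls_cmult phi_dcls) auto

lemma rho1_dcls: "dcls (rho1 c L)"
  unfolding rho1_def[abs_def] by (intro dcls_sum dcls_cmult phi1_dcls) auto

lemma rho_deriv: "(rho c L has_real_derivative rho1 c L y) (at y)"
proof -
  have "((\<lambda>y. \<Sum>j\<le>L. c j * phi j y) has_real_derivative (\<Sum>j\<le>L. c j * phi1 j y)) (at y)"
    by (rule DERIV_sum) (auto intro!: derivative_eq_intros phi_deriv)
  then show ?thesis unfolding rho_def[abs_def] rho1_def by simp
qed

lemma Qf_ge1: "1 \<le> Qf lam y"
proof -
  have "1 + (- (lam\<^sup>2 * y\<^sup>2)) \<le> exp (- (lam\<^sup>2 * y\<^sup>2))" using exp_ge_add_one_self by blast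
  then show ?thesis unfolding Qf_def by simp
qed

lemma Qf_cls: assumes "0 < lam" shows "cls (Qf lam)"
proof -
  have "cls (\<lambda>y. lam\<^sup>2 * (y * y) + exp (- (lam\<^sup>2) * y\<^sup>2 + 0 * y))"
    using assms by (intro cls.intros) auto
  then show ?thesis unfolding Qf_def[abs_def] by (simp add: power2_eq_square)
qed

lemma Qf_deriv: "(Qf lam has_real_derivative Q1 lam y) (at y)"
  unfolding Qf_def[abs_def] Q1_def
  by (auto intro!: derivative_eq_intros simp: power2_eq_square algebra_simps)

lemma Qf_id: "Qf lam y - 1/2 * y * Q1 lam y = exp (- (lam\<^sup>2) * y\<^sup>2) * (1 + lam\<^sup>2 * y\<^sup>2)"
  unfolding Qf_def Q1_def by (simp add: algebra_simps power2_eq_square)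

lemma isq_cls: "cls f \<Longrightarrow> (\<And>x. 1 \<le> f x) \<Longrightarrow> cls (\<lambda>x. 1 / sqrt (f x))"
  by (rule cls_isqrt[of f 1]) auto

lemma mm_zero: "i < j \<Longrightarrow> mm i j = 0"
  unfolding mm_def phi_def by (rule mom_zero[OF g0_dcls]) simp

lemma mm_diag: "mm i i \<noteq> 0"
proof -
  have "mm i i = (- 1) ^ (i + 2) * fact (i + 2) * integral UNIV g0"
    unfolding mm_def phi_def by (rule mom_diag[OF g0_dcls])
  moreover have "0 < integral UNIV g0" using gauss_pos unfolding g0_def[abs_def] .
  ultimately show ?thesis by simp
qed

lemma Hf_dcls: "dcls Hf"
proof -
  have "cls (\<lambda>z. 1 / sqrt (Qf 1 z))" by (intro isq_cls Qf_cls Qf_ge1) simp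
  then have "cls (\<lambda>z. (1 / sqrt (Qf 1 z)) * (1 / sqrt (Qf 1 z)))" by (intro cls_mult)
  then show ?thesis unfolding Hf_def[abs_def] by (intro dclsI) simp
qed

lemma Hf_scale: "Hf (lam * y) = exp (- (lam\<^sup>2) * y\<^sup>2) * ((1 / sqrt (Qf lam y)) * (1 / sqrt (Qf lam y)))"
  unfolding Hf_def Qf_def by (simp add: power_mult_distrib)

lemma rr_bound:
  assumes lam: "1 \<le> lam"
  shows "\<bar>rr lam i\<bar> \<le> \<bar>integral UNIV (\<lambda>z. z ^ i * Hf z)\<bar> / lam"
proof -
  let ?h = "\<lambda>z. z ^ i * Hf z"
  have gh: "good ?h" by (intro dcls_good dcls_poly Hf_dcls)
  have ih: "integrable lborel ?h" using good_integrable[OF gh] .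
  have l0: "lam \<noteq> 0" using lam by simp
  have ih2: "integrable lborel (\<lambda>y. ?h (0 + lam * y))"
    using lborel_integrable_real_affine[OF ih l0] .
  have e1: "(\<integral>z. ?h z \<partial>lborel) = \<bar>lam\<bar> *\<^sub>R (\<integral>y. ?h (0 + lam * y) \<partial>lborel)"
    by (rule lborel_integral_real_affine[OF l0])
  have e2: "(\<lambda>y. ?h (0 + lam * y)) = (\<lambda>y. lam ^ i * (y ^ i * Hf (lam * y)))"
    by (simp add: power_mult_distrib mult.assoc)
  have ir: "integrable lborel (\<lambda>y. y ^ i * Hf (lam * y))"
  proof -
    have "integrable lborel (\<lambda>y. (1 / lam ^ i) * (lam ^ i * (y ^ i * Hf (lam * y))))"
      using ih2 unfolding e2 by (rule integrable_mult_right)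
    moreover have "(\<lambda>y. (1 / lam ^ i) * (lam ^ i * (y ^ i * Hf (lam * y)))) = (\<lambda>y. y ^ i * Hf (lam * y))"
      using l0 by simp
    ultimately show ?thesis by simp
  qed
  have "integral UNIV ?h = lam * (lam ^ i * rr lam i)"
    unfolding rr_def integral_lborel[OF ih] integral_lborel[OF ir] e1 e2 using lam by simp
  then have "rr lam i = integral UNIV ?h / lam / lam ^ i" using l0 by (simp add: field_simps)
  then have "\<bar>rr lam i\<bar> = \<bar>integral UNIV ?h\<bar> / lam / lam ^ i" using lam by (simp add: abs_divide)
  also have "\<dots> \<le> \<bar>integral UNIV ?h\<bar> / lam"
  proof -
    have "1 \<le> lam ^ i" using lam by (simp add: one_le_power)
    then have "\<bar>integral UNIV ?h\<bar> / lam / lam ^ i \<le> \<bar>integral UNIV ?h\<bar> / lam / 1"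
      using lam by (intro divide_left_mono) auto
    then show ?thesis by simp
  qed
  finally show ?thesis .
qed

lemma cls_power: "cls f \<Longrightarrow> cls (\<lambda>x. f x ^ n)"
proof (induction n)
  case 0 then show ?case using cls_const[of 1] by simp
next
  case (Suc n) then show ?case using cls_mult[OF Suc.prems Suc.IH] by simp
qed

lemma Q1_cls: assumes "0 < lam" shows "cls (Q1 lam)"
proof -
  have "cls (\<lambda>y. (2 * lam\<^sup>2) * y + (- 2 * lam\<^sup>2) * (y * exp (- (lam\<^sup>2) * y\<^sup>2 + 0 * y)))"
    using assms by (intro cls.intros) auto
  then show ?thesis unfolding Q1_def[abs_def] by (simp add: algebra_simps)
qed

context
  fixes lam :: real and c :: "nat \<Rightarrow> real" and L :: nat
  assumes lam1: "1 \<le> lam" and Fbd: "\<And>y. 1/2 \<le> Ff lam c L y"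
begin

lemma lam0: "0 < lam" using lam1 by simp

lemma Ff_cls: "cls (Ff lam c L)"
proof -
  have "cls (\<lambda>y. lam\<^sup>2 + rho c L y * Qf lam y)"
    by (intro cls.intros dcls_cls rho_dcls Qf_cls lam0)
  then show ?thesis unfolding Ff_def[abs_def] .
qed

lemma uF_cls: "cls (\<lambda>y. 1 / sqrt (Ff lam c L y))"
  by (rule cls_isqrt[OF Ff_cls _ Fbd]) simp

lemma uQ_cls: "cls (\<lambda>y. 1 / sqrt (Qf lam y))"
  by (intro isq_cls Qf_cls lam0 Qf_ge1)

lemma Af_cls: "cls (Af lam c L)"
proof -
  have "cls (\<lambda>y. 1/2 * y * Ff lam c L y * (1 / sqrt (Ff lam c L y)) * (1 / sqrt (Qf lam y)))"
    by (intro cls.intros Ff_cls uF_cls uQ_cls)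
  then show ?thesis unfolding Af_def[abs_def] .
qed

lemma F1_dcls: "dcls (F1 lam c L)"
proof -
  have "dcls (\<lambda>y. rho1 c L y * Qf lam y + rho c L y * Q1 lam y)"
    by (intro dcls_add dcls_mult(1) rho1_dcls rho_dcls Qf_cls Q1_cls lam0)
  then show ?thesis unfolding F1_def[abs_def] .
qed

lemma Ff_deriv: "(Ff lam c L has_real_derivative F1 lam c L y) (at y)"
proof -
  have "((\<lambda>y. lam\<^sup>2 + rho c L y * Qf lam y) has_real_derivative
      0 + (rho1 c L y * Qf lam y + Q1 lam y * rho c L y)) (at y)"
    by (rule DERIV_add[OF DERIV_const DERIV_mult[OF rho_deriv Qf_deriv]])
  then show ?thesis unfolding Ff_def[abs_def] F1_def by (simp add: mult.commute)
qed

lemma Fpos: "0 < Ff lam c L y" using Fbd[of y] by linarith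
lemma Qpos: "0 < Qf lam y" using Qf_ge1[of lam y] by linarith

lemma Af_deriv: "(Af lam c L has_real_derivative thf lam c L y) (at y)"
  unfolding Af_def[abs_def] thf_def
  by (rule A_deriv_gen[OF Ff_deriv Qf_deriv Fpos Qpos])

lemma thf_dcls: "dcls (thf lam c L)"
proof -
  let ?uF = "\<lambda>y. 1 / sqrt (Ff lam c L y)"
  let ?uQ = "\<lambda>y. 1 / sqrt (Qf lam y)"
  have e: "thf lam c L = (\<lambda>y. exp (- (lam\<^sup>2) * y\<^sup>2) *
        (1/2 * Ff lam c L y * ?uF y * ?uQ y ^ 3 * (1 + lam\<^sup>2 * y\<^sup>2)) +
      F1 lam c L y * (1/4 * y * ?uF y * ?uQ y))"
  proof
    fix y
    show "thf lam c L y = exp (- (lam\<^sup>2) * y\<^sup>2) *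
        (1/2 * Ff lam c L y * ?uF y * ?uQ y ^ 3 * (1 + lam\<^sup>2 * y\<^sup>2)) +
      F1 lam c L y * (1/4 * y * ?uF y * ?uQ y)"
      unfolding thf_def Qf_id by (simp only: ac_simps)
  qed
  have c1: "cls (\<lambda>y. 1/2 * Ff lam c L y * ?uF y * ?uQ y ^ 3 * (1 + lam\<^sup>2 * (y * y)))"
    by (intro cls.intros cls_power Ff_cls uF_cls uQ_cls)
  have d1: "dcls (\<lambda>y. exp (- (lam\<^sup>2) * y\<^sup>2) *
        (1/2 * Ff lam c L y * ?uF y * ?uQ y ^ 3 * (1 + lam\<^sup>2 * y\<^sup>2)))"
    using dclsI[OF _ c1, of "lam\<^sup>2"] lam0 by (simp add: power2_eq_square)
  have d2: "dcls (\<lambda>y. F1 lam c L y * (1/4 * y * ?uF y * ?uQ y))"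
    by (intro dcls_mult(1) F1_dcls cls.intros uF_cls uQ_cls)
  show ?thesis unfolding e by (rule dcls_add[OF d1 d2])
qed

lemma AQ_dcls: "dcls (AQ lam c L)"
proof -
  have c1: "cls (\<lambda>y. (1 / sqrt (Qf lam y)) * (1 / sqrt (Qf lam y)))" by (intro cls.intros uQ_cls)
  have d1: "dcls (\<lambda>y. exp (- (lam\<^sup>2) * y\<^sup>2) * ((1 / sqrt (Qf lam y)) * (1 / sqrt (Qf lam y))))"
    using dclsI[OF _ c1, of "lam\<^sup>2"] lam0 by simp
  have "dcls (\<lambda>y. 1/4 * (y ^ 2 * rho c L y + (- 1) * (exp (- (lam\<^sup>2) * y\<^sup>2) * ((1 / sqrt (Qf lam y)) * (1 / sqrt (Qf lam y))))))"
    by (intro dcls_cmult dcls_add dcls_poly rho_dcls d1)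
  then show ?thesis unfolding AQ_def[abs_def] by simp
qed

lemma Af_sq: "(Af lam c L y)\<^sup>2 - 1/4 = AQ lam c L y"
proof -
  define F where "F = Ff lam c L y"
  define Q where "Q = Qf lam y"
  define E where "E = exp (- (lam\<^sup>2) * y\<^sup>2)"
  have F: "0 < F" using Fpos by (simp add: F_def)
  have Q: "0 < Q" using Qpos by (simp add: Q_def)
  have QE: "lam\<^sup>2 * y\<^sup>2 = Q - E" by (simp add: Q_def E_def Qf_def)
  have FF: "F = lam\<^sup>2 + rho c L y * Q" by (simp add: F_def Q_def Ff_def)
  have "(Af lam c L y)\<^sup>2 = (1/2 * y * F * (1 / sqrt F) * (1 / sqrt Q))\<^sup>2"
    by (simp add: Af_def F_def Q_def)
  also have "\<dots> = 1/4 * y\<^sup>2 * F / Q"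
    using F Q by (simp add: power_mult_distrib power_divide field_simps power2_eq_square)
  also have "\<dots> = 1/4 * (lam\<^sup>2 * y\<^sup>2) / Q + 1/4 * y\<^sup>2 * rho c L y"
    using Q by (simp add: FF field_simps power2_eq_square)
  also have "\<dots> = 1/4 - 1/4 * (E / Q) + 1/4 * y\<^sup>2 * rho c L y"
    using Q unfolding QE by (simp add: field_simps)
  finally have "(Af lam c L y)\<^sup>2 - 1/4 = 1/4 * (y\<^sup>2 * rho c L y - E / Q)" by simp
  moreover have "AQ lam c L y = 1/4 * (y\<^sup>2 * rho c L y - E / Q)"
    using Q by (simp add: AQ_def E_def Q_def power2_eq_square)
  ultimately show ?thesis by simp
qed

lemma Af_pos: "0 \<le> y \<Longrightarrow> 0 \<le> Af lam c L y"
  unfolding Af_def using Fpos[of y] Qpos[of y] by simp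

lemma Af_neg: assumes y: "y \<le> 0" shows "Af lam c L y \<le> 0"
proof -
  have "Af lam c L y = y * (1/2 * Ff lam c L y * (1 / sqrt (Ff lam c L y)) * (1 / sqrt (Qf lam y)))"
    unfolding Af_def by simp
  moreover have "0 \<le> 1/2 * Ff lam c L y * (1 / sqrt (Ff lam c L y)) * (1 / sqrt (Qf lam y))"
    using Fpos[of y] Qpos[of y] by simp
  ultimately show ?thesis using y mult_nonpos_nonneg by metis
qed

lemma Asq_lim: "((\<lambda>y. (Af lam c L y)\<^sup>2) \<longlongrightarrow> 1/4) at_top" "((\<lambda>y. (Af lam c L y)\<^sup>2) \<longlongrightarrow> 1/4) at_bot"
proof -
  have d: "decays (AQ lam c L)" using dcls_decays[OF AQ_dcls] .
  have e: "(\<lambda>y. (Af lam c L y)\<^sup>2) = (\<lambda>y. AQ lam c L y + 1/4)"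
    using Af_sq by (simp add: fun_eq_iff algebra_simps)
  show "((\<lambda>y. (Af lam c L y)\<^sup>2) \<longlongrightarrow> 1/4) at_top"
    unfolding e using tendsto_add[OF decays_tendsto(1)[OF d] tendsto_const[of "1/4"]] by simp
  show "((\<lambda>y. (Af lam c L y)\<^sup>2) \<longlongrightarrow> 1/4) at_bot"
    unfolding e using tendsto_add[OF decays_tendsto(2)[OF d] tendsto_const[of "1/4"]] by simp
qed

lemma Af_top: "(Af lam c L \<longlongrightarrow> 1/2) at_top"
proof -
  have "((\<lambda>y. sqrt ((Af lam c L y)\<^sup>2)) \<longlongrightarrow> sqrt (1/4)) at_top"
    by (rule tendsto_real_sqrt[OF Asq_lim(1)])
  moreover have "sqrt (1/4::real) = 1/2" by (simp add: real_sqrt_divide)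
  moreover have "eventually (\<lambda>y. sqrt ((Af lam c L y)\<^sup>2) = Af lam c L y) at_top"
    using eventually_ge_at_top[of "0::real"] by (rule eventually_mono) (simp add: Af_pos)
  ultimately show ?thesis using Lim_transform_eventually by fastforce
qed

lemma Af_bot: "(Af lam c L \<longlongrightarrow> - 1/2) at_bot"
proof -
  have "((\<lambda>y. - sqrt ((Af lam c L y)\<^sup>2)) \<longlongrightarrow> - sqrt (1/4)) at_bot"
    by (rule tendsto_minus[OF tendsto_real_sqrt[OF Asq_lim(2)]])
  moreover have "sqrt (1/4::real) = 1/2" by (simp add: real_sqrt_divide)
  moreover have "eventually (\<lambda>y. - sqrt ((Af lam c L y)\<^sup>2) = Af lam c L y) at_bot"
    using eventually_le_at_bot[of "0::real"] by (rule eventually_mono) (simp add: Af_neg abs_of_nonpos)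
  ultimately show ?thesis using Lim_transform_eventually by fastforce
qed

end

context
  fixes lam :: real and c :: "nat \<Rightarrow> real" and L :: nat
  assumes lam1: "1 \<le> lam" and Fbd: "\<And>y. 1/2 \<le> Ff lam c L y"
begin

lemma thd: "dcls (thf lam c L)" by (rule thf_dcls[OF lam1 Fbd])
lemma Ac: "cls (Af lam c L)" by (rule Af_cls[OF lam1 Fbd])
lemma AQd: "dcls (AQ lam c L)" by (rule AQ_dcls[OF lam1 Fbd])
lemma Ad: "(Af lam c L has_real_derivative thf lam c L y) (at y)" by (rule Af_deriv[OF lam1 Fbd])
lemma Asq: "(Af lam c L y)\<^sup>2 - 1/4 = AQ lam c L y" by (rule Af_sq[OF lam1 Fbd])

lemma th_good: "good (thf lam c L)" by (rule dcls_good[OF thd])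

lemma K_eq: "Kfun (thf lam c L) x = Af lam c L x + 1/2"
proof -
  let ?K = "Kfun (thf lam c L)" and ?A = "Af lam c L"
  have d: "((\<lambda>y. ?K y - ?A y) has_real_derivative 0) (at y)" for y
    using DERIV_diff[OF K_deriv[OF th_good] Ad, of y] by simp
  have const: "?K y - ?A y = ?K x - ?A x" for y
    using DERIV_isconst_all[of "\<lambda>y. ?K y - ?A y"] d by blast
  have t: "((\<lambda>y. ?K y - ?A y) \<longlongrightarrow> 0 - (- 1/2)) at_bot"
    by (rule tendsto_diff[OF K_bot[OF th_good] Af_bot[OF lam1 Fbd]])
  have e: "(\<lambda>y. ?K y - ?A y) = (\<lambda>y::real. ?K x - ?A x)" by (rule ext) (rule const)
  have "((\<lambda>y::real. ?K x - ?A x) \<longlongrightarrow> 0 - (- 1/2)) at_bot" using t unfolding e .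
  then have t2: "((\<lambda>y::real. ?K x - ?A x) \<longlongrightarrow> 1/2) at_bot" by simp
  have nb: "(at_bot :: real filter) \<noteq> bot" by simp
  have "1/2 = ?K x - ?A x" by (rule tendsto_unique[OF nb t2 tendsto_const])
  then have "?K x - ?A x = 1/2" by simp
  then show ?thesis by simp
qed

lemma th_int1: "(thf lam c L has_integral 1) UNIV"
proof -
  have "(thf lam c L has_integral (1/2 - (- 1/2))) UNIV"
  proof (rule FTC_R[where F = "Af lam c L"])
    show "\<And>x. (Af lam c L has_real_derivative thf lam c L x) (at x)" by (rule Ad)
    show "continuous_on UNIV (thf lam c L)" using th_good by (simp add: good_def)
    show "integrable lborel (thf lam c L)" using good_integrable[OF th_good] .
    show "(Af lam c L \<longlongrightarrow> - 1/2) at_bot" by (rule Af_bot[OF lam1 Fbd])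
    show "(Af lam c L \<longlongrightarrow> 1/2) at_top" by (rule Af_top[OF lam1 Fbd])
  qed
  then show ?thesis by simp
qed

lemma mom_A:
  "integral UNIV (\<lambda>x. x ^ k * (thf lam c L x * Af lam c L x)) =
     - (real k / 2) * integral UNIV (\<lambda>x. x ^ (k - 1) * AQ lam c L x)"
proof -
  let ?A = "Af lam c L" and ?t = "thf lam c L" and ?Q = "AQ lam c L"
  let ?f = "\<lambda>x. real k / 2 * (x ^ (k - 1) * ?Q x) + x ^ k * (?t x * ?A x)"
  have g1: "good (\<lambda>x. real k / 2 * (x ^ (k - 1) * ?Q x))"
    by (intro good_cmult dcls_good dcls_poly AQd)
  have g2: "good (\<lambda>x. x ^ k * (?t x * ?A x))"
    by (intro dcls_good dcls_poly dcls_mult(1) thd Ac)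
  have gf: "good ?f" by (rule good_add[OF g1 g2])
  have "(?f has_integral (0 - 0)) UNIV"
  proof (rule FTC_R[where F = "\<lambda>x. x ^ k * ((?A x)\<^sup>2 - 1/4) / 2"])
    fix x
    show "((\<lambda>x. x ^ k * ((?A x)\<^sup>2 - 1/4) / 2) has_real_derivative ?f x) (at x)"
      using Ad[of x]
      by (auto intro!: derivative_eq_intros simp: Asq[symmetric])
  next
    show "continuous_on UNIV ?f" using gf by (simp add: good_def)
    show "integrable lborel ?f" using good_integrable[OF gf] .
    have e: "(\<lambda>x. x ^ k * ((?A x)\<^sup>2 - 1/4) / 2) = (\<lambda>x. 1/2 * (x ^ k * ?Q x))"
      by (simp add: Asq fun_eq_iff)
    have "decays (\<lambda>x. 1/2 * (x ^ k * ?Q x))" by (intro decays_cmult dcls_decays dcls_poly AQd)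
    then show "((\<lambda>x. x ^ k * ((?A x)\<^sup>2 - 1/4) / 2) \<longlongrightarrow> 0) at_bot"
      "((\<lambda>x. x ^ k * ((?A x)\<^sup>2 - 1/4) / 2) \<longlongrightarrow> 0) at_top"
      unfolding e using decays_tendsto by auto
  qed
  then have "integral UNIV ?f = 0" by (simp add: integral_unique)
  moreover have "integral UNIV ?f = real k / 2 * integral UNIV (\<lambda>x. x ^ (k - 1) * ?Q x) +
      integral UNIV (\<lambda>x. x ^ k * (?t x * ?A x))"
  proof -
    have i1: "(\<lambda>x. real k / 2 * (x ^ (k - 1) * ?Q x)) integrable_on UNIV" by (rule good_integrable_on[OF _ g1]) simp
    have i2: "(\<lambda>x. x ^ k * (?t x * ?A x)) integrable_on UNIV" by (rule good_integrable_on[OF _ g2]) simp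
    show ?thesis by (simp only: integral_add[OF i1 i2] integral_mult_right)
  qed
  ultimately show ?thesis by linarith
qed

lemma Hl_dcls: "dcls (\<lambda>x. x ^ i * Hf (lam * x))"
proof -
  have c1: "cls (\<lambda>y. (1 / sqrt (Qf lam y)) * (1 / sqrt (Qf lam y)))"
    by (intro cls.intros uQ_cls[OF lam1 Fbd])
  have d1: "dcls (\<lambda>y. exp (- (lam\<^sup>2) * y\<^sup>2) * ((1 / sqrt (Qf lam y)) * (1 / sqrt (Qf lam y))))"
    using dclsI[OF _ c1, of "lam\<^sup>2"] lam1 by simp
  show ?thesis unfolding Hf_scale by (rule dcls_poly[OF d1])
qed

lemma mom_AQ:
  "integral UNIV (\<lambda>x. x ^ i * AQ lam c L x) = 1/4 * ((\<Sum>j\<le>L. c j * mm i j) - rr lam i)"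
proof -
  have e: "x ^ i * AQ lam c L x = 1/4 * ((\<Sum>j\<le>L. c j * (x ^ (i + 2) * phi j x)) - x ^ i * Hf (lam * x))" for x
    unfolding AQ_def rho_def Hf_scale
    by (simp add: sum_distrib_left algebra_simps power_add power2_eq_square)
  have i_s: "(\<lambda>x. \<Sum>j\<le>L. c j * (x ^ (i + 2) * phi j x)) integrable_on UNIV"
    by (intro integrable_sum int_cmul good_integrable_on[OF _ dcls_good[OF dcls_poly[OF phi_dcls]]]) simp_all
  have ih: "(\<lambda>x. x ^ i * Hf (lam * x)) integrable_on UNIV"
    by (rule good_integrable_on[OF _ dcls_good[OF Hl_dcls]]) simp
  have "integral UNIV (\<lambda>x. x ^ i * AQ lam c L x) =
      1/4 * (integral UNIV (\<lambda>x. \<Sum>j\<le>L. c j * (x ^ (i + 2) * phi j x)) - integral UNIV (\<lambda>x. x ^ i * Hf (lam * x)))"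
    unfolding e integral_mult_right integral_diff[OF i_s ih] ..
  also have "integral UNIV (\<lambda>x. \<Sum>j\<le>L. c j * (x ^ (i + 2) * phi j x)) = (\<Sum>j\<le>L. c j * mm i j)"
  proof -
    have "integral UNIV (\<lambda>x. \<Sum>j\<le>L. c j * (x ^ (i + 2) * phi j x)) =
        (\<Sum>j\<le>L. integral UNIV (\<lambda>x. c j * (x ^ (i + 2) * phi j x)))"
      by (intro integral_sum int_cmul good_integrable_on[OF _ dcls_good[OF dcls_poly[OF phi_dcls]]]) simp_all
    also have "\<dots> = (\<Sum>j\<le>L. c j * mm i j)" unfolding mm_def by (simp only: integral_mult_right)
    finally show ?thesis .
  qed
  finally show ?thesis unfolding rr_def .
qed

lemma moments:
  assumes sol: "\<forall>i\<le>L. (\<Sum>j\<le>L. c j * mm i j) = rr lam i" and k: "k \<le> Suc L"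
  shows "(1/2) * integral UNIV (\<lambda>x. x ^ k * thf lam c L x)
         = integral UNIV (\<lambda>x. x ^ k * thf lam c L x * Kfun (thf lam c L) x)"
proof -
  let ?A = "Af lam c L" and ?t = "thf lam c L"
  have z: "integral UNIV (\<lambda>x. x ^ k * (?t x * ?A x)) = 0"
  proof (cases k)
    case 0 then show ?thesis using mom_A[of 0] by simp
  next
    case (Suc i)
    then have "i \<le> L" using k by simp
    then show ?thesis using mom_A[of k] mom_AQ[of i] sol Suc by simp
  qed
  have e: "x ^ k * ?t x * Kfun ?t x = x ^ k * (?t x * ?A x) + 1/2 * (x ^ k * ?t x)" for x
    unfolding K_eq by (simp add: algebra_simps)
  have i1: "(\<lambda>x. x ^ k * (?t x * ?A x)) integrable_on UNIV"
    by (rule good_integrable_on[OF _ dcls_good[OF dcls_poly[OF dcls_mult(1)[OF thd Ac]]]]) simp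
  have i2: "(\<lambda>x. 1/2 * (x ^ k * ?t x)) integrable_on UNIV"
    by (rule good_integrable_on[OF _ dcls_good[OF dcls_cmult[OF dcls_poly[OF thd]]]]) simp
  show ?thesis unfolding e integral_add[OF i1 i2] z integral_mult_right by simp
qed

end

lemma exists_theta:
  "\<exists>\<theta>. schwartz \<theta> \<and> (\<theta> has_integral 1) UNIV \<and>
     (\<forall>k<l. (1/2) * integral UNIV (\<lambda>x. x ^ k * \<theta> x) = integral UNIV (\<lambda>x. x ^ k * \<theta> x * Kfun \<theta> x))"
proof -
  define L where "L = l"
  obtain B where B0: "0 \<le> B" and Bsol: "\<And>r. \<exists>c. (\<forall>i\<le>L. (\<Sum>j\<le>i. c j * mm i j) = r i) \<and>
             (\<forall>j\<le>L. \<bar>c j\<bar> \<le> B * (\<Sum>i\<le>L. \<bar>r i\<bar>))"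
    using tri_solve[of mm L] mm_diag by blast
  have "\<forall>j. \<exists>P. \<forall>y. (1 + y\<^sup>2) * \<bar>phi j y\<bar> \<le> P"
  proof
    fix j
    obtain C0 where C0: "\<And>y. \<bar>y\<bar> ^ 0 * \<bar>phi j y\<bar> \<le> C0" using decaysD[OF dcls_decays[OF phi_dcls]] by blast
    obtain C2 where C2: "\<And>y. \<bar>y\<bar> ^ 2 * \<bar>phi j y\<bar> \<le> C2" using decaysD[OF dcls_decays[OF phi_dcls]] by blast
    have "(1 + y\<^sup>2) * \<bar>phi j y\<bar> \<le> C0 + C2" for y using C0[of y] C2[of y]
      by (simp add: algebra_simps power2_abs)
    then show "\<exists>P. \<forall>y. (1 + y\<^sup>2) * \<bar>phi j y\<bar> \<le> P" by blast
  qed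
  then obtain P where P: "\<And>j y. (1 + y\<^sup>2) * \<bar>phi j y\<bar> \<le> P j" by metis
  have P0: "0 \<le> P j" for j
  proof -
    have "0 \<le> (1 + (0::real)\<^sup>2) * \<bar>phi j 0\<bar>" by simp
    then show ?thesis using P[where j=j and y=0] by linarith
  qed
  define Rs where "Rs = (\<Sum>i\<le>L. \<bar>integral UNIV (\<lambda>z. z ^ i * Hf z)\<bar>)"
  define Ps where "Ps = (\<Sum>j\<le>L. P j)"
  have Rs0: "0 \<le> Rs" unfolding Rs_def by (intro sum_nonneg) auto
  have Ps0: "0 \<le> Ps" unfolding Ps_def by (intro sum_nonneg P0)
  define lam where "lam = max 1 (2 * B * Rs * Ps)"
  have lam1: "1 \<le> lam" by (simp add: lam_def)
  have lamb: "2 * B * Rs * Ps \<le> lam" by (simp add: lam_def)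
  obtain c where c1: "\<And>i. i \<le> L \<Longrightarrow> (\<Sum>j\<le>i. c j * mm i j) = rr lam i"
    and c2: "\<And>j. j \<le> L \<Longrightarrow> \<bar>c j\<bar> \<le> B * (\<Sum>i\<le>L. \<bar>rr lam i\<bar>)"
    using Bsol[of "rr lam"] by blast
  have S: "(\<Sum>i\<le>L. \<bar>rr lam i\<bar>) \<le> Rs / lam"
  proof -
    have "(\<Sum>i\<le>L. \<bar>rr lam i\<bar>) \<le> (\<Sum>i\<le>L. \<bar>integral UNIV (\<lambda>z. z ^ i * Hf z)\<bar> / lam)"
      by (intro sum_mono rr_bound lam1)
    also have "\<dots> = Rs / lam" unfolding Rs_def by (simp add: sum_divide_distrib)
    finally show ?thesis .
  qed
  have sol: "(\<Sum>j\<le>L. c j * mm i j) = rr lam i" if i: "i \<le> L" for i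
  proof -
    have "{..L} = {..i} \<union> {i<..L}" using i by auto
    then have "(\<Sum>j\<le>L. c j * mm i j) = (\<Sum>j\<le>i. c j * mm i j) + (\<Sum>j\<in>{i<..L}. c j * mm i j)"
      by (simp only:) (rule sum.union_disjoint, auto)
    also have "(\<Sum>j\<in>{i<..L}. c j * mm i j) = 0" by (intro sum.neutral) (auto simp: mm_zero)
    finally show ?thesis using c1[OF i] by simp
  qed
  have solA: "\<forall>i\<le>L. (\<Sum>j\<le>L. c j * mm i j) = rr lam i" using sol by blast
  have Fbd: "1/2 \<le> Ff lam c L y" for y
  proof -
    have cP: "(\<Sum>j\<le>L. \<bar>c j\<bar> * P j) \<le> 1/2"
    proof -
      have "(\<Sum>j\<le>L. \<bar>c j\<bar> * P j) \<le> (\<Sum>j\<le>L. (B * (Rs / lam)) * P j)"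
      proof (intro sum_mono mult_right_mono P0)
        fix j assume "j \<in> {..L}"
        then show "\<bar>c j\<bar> \<le> B * (Rs / lam)" using c2[of j] mult_left_mono[OF S B0] by simp
      qed
      also have "\<dots> = B * Rs * Ps / lam" unfolding Ps_def by (simp add: sum_distrib_left sum_divide_distrib)
      also have "\<dots> \<le> 1/2"
        using lamb lam1 by (simp add: divide_le_eq)
      finally show ?thesis .
    qed
    have Q: "Qf lam y \<le> lam\<^sup>2 * (1 + y\<^sup>2)"
    proof -
      have "exp (- (lam\<^sup>2) * y\<^sup>2) \<le> 1" by simp
      moreover have "1 \<le> lam\<^sup>2" using lam1 by (simp add: one_le_power)
      ultimately have "exp (- (lam\<^sup>2) * y\<^sup>2) \<le> lam\<^sup>2" by linarith
      then show ?thesis unfolding Qf_def by (simp add: algebra_simps)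
    qed
    have "\<bar>rho c L y * Qf lam y\<bar> \<le> (\<Sum>j\<le>L. \<bar>c j\<bar> * \<bar>phi j y\<bar>) * (lam\<^sup>2 * (1 + y\<^sup>2))"
    proof -
      have "\<bar>rho c L y\<bar> \<le> (\<Sum>j\<le>L. \<bar>c j\<bar> * \<bar>phi j y\<bar>)"
        unfolding rho_def by (rule order_trans[OF sum_abs]) (simp add: abs_mult)
      moreover have "0 \<le> Qf lam y" using Qf_ge1[of lam y] by linarith
      ultimately show ?thesis using Q
        by (simp add: abs_mult) (intro mult_mono, auto intro: sum_nonneg)
    qed
    also have "\<dots> = lam\<^sup>2 * (\<Sum>j\<le>L. \<bar>c j\<bar> * ((1 + y\<^sup>2) * \<bar>phi j y\<bar>))"
      by (simp add: sum_distrib_left sum_distrib_right mult_ac)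
    also have "\<dots> \<le> lam\<^sup>2 * (\<Sum>j\<le>L. \<bar>c j\<bar> * P j)"
      by (intro mult_left_mono sum_mono P) auto
    also have "\<dots> \<le> lam\<^sup>2 * (1/2)" using cP by (intro mult_left_mono) auto
    finally have "\<bar>rho c L y * Qf lam y\<bar> \<le> lam\<^sup>2 / 2" by simp
    moreover have "1 \<le> lam\<^sup>2" using lam1 by (simp add: one_le_power)
    ultimately show ?thesis unfolding Ff_def by linarith
  qed
  show ?thesis
  proof (intro exI conjI allI impI)
    show "schwartz (thf lam c L)" by (rule dcls_schwartz[OF thd[OF lam1 Fbd]])
    show "(thf lam c L has_integral 1) UNIV" by (rule th_int1[OF lam1 Fbd])
    fix k assume "k < l"
    then have "k \<le> Suc L" by (simp add: L_def)
    then show "(1/2) * integral UNIV (\<lambda>x. x ^ k * thf lam c L x) =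
        integral UNIV (\<lambda>x. x ^ k * thf lam c L x * Kfun (thf lam c L) x)"
      by (rule moments[OF lam1 Fbd solA])
  qed
qed

theorem mainTheorem3:
  fixes T :: real and l :: nat
  assumes "0 \<le> T"
  shows "(\<exists>\<theta>. schwartz \<theta> \<and> (\<theta> has_integral 1) UNIV \<and>
            (\<forall>h0 dh. dh \<noteq> 0 \<longrightarrow> hopf_solution_upto (shock_wave \<theta> h0 dh (h0 + dh / 2)) T l) \<and>
            (\<forall>k<l. (1/2) * integral UNIV (\<lambda>x. x ^ k * \<theta> x)
                     = integral UNIV (\<lambda>x. x ^ k * \<theta> x * Kfun \<theta> x)))
       \<and> (\<forall>\<theta>. schwartz \<theta> \<and> (\<theta> has_integral 1) UNIV \<longrightarrow>
            ((\<forall>h0 dh. dh \<noteq> 0 \<longrightarrow> hopf_solution_upto (shock_wave \<theta> h0 dh (h0 + dh / 2)) T l)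
             \<longleftrightarrow> (\<forall>k<l. (1/2) * integral UNIV (\<lambda>x. x ^ k * \<theta> x)
                     = integral UNIV (\<lambda>x. x ^ k * \<theta> x * Kfun \<theta> x))))
       \<and> (1 \<le> l \<longrightarrow> (\<forall>\<theta> h0 dh a. schwartz \<theta> \<and> (\<theta> has_integral 1) UNIV \<and> dh \<noteq> 0 \<and>
            hopf_solution_upto (shock_wave \<theta> h0 dh a) T l \<longrightarrow> (a - h0) / dh = 1/2))"
proof (intro conjI)
  obtain \<theta> where th: "schwartz \<theta>" "(\<theta> has_integral 1) UNIV"
    "\<forall>k<l. (1/2) * integral UNIV (\<lambda>x. x ^ k * \<theta> x) = integral UNIV (\<lambda>x. x ^ k * \<theta> x * Kfun \<theta> x)"
    using exists_theta[of l] by (elim exE conjE) (rule that)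
  have h: "\<forall>h0 dh. dh \<noteq> 0 \<longrightarrow> hopf_solution_upto (shock_wave \<theta> h0 dh (h0 + dh / 2)) T l"
    using partB[OF th(1) assms, of l] th(3) by (rule iffD2)
  show "\<exists>\<theta>. schwartz \<theta> \<and> (\<theta> has_integral 1) UNIV \<and>
            (\<forall>h0 dh. dh \<noteq> 0 \<longrightarrow> hopf_solution_upto (shock_wave \<theta> h0 dh (h0 + dh / 2)) T l) \<and>
            (\<forall>k<l. (1/2) * integral UNIV (\<lambda>x. x ^ k * \<theta> x)
                     = integral UNIV (\<lambda>x. x ^ k * \<theta> x * Kfun \<theta> x))"
    by (rule exI[of _ \<theta>]) (intro conjI th h)
next
  show "\<forall>\<theta>. schwartz \<theta> \<and> (\<theta> has_integral 1) UNIV \<longrightarrow>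
            ((\<forall>h0 dh. dh \<noteq> 0 \<longrightarrow> hopf_solution_upto (shock_wave \<theta> h0 dh (h0 + dh / 2)) T l)
             \<longleftrightarrow> (\<forall>k<l. (1/2) * integral UNIV (\<lambda>x. x ^ k * \<theta> x)
                     = integral UNIV (\<lambda>x. x ^ k * \<theta> x * Kfun \<theta> x)))"
  proof (intro allI impI)
    fix \<theta> :: "real \<Rightarrow> real" assume "schwartz \<theta> \<and> (\<theta> has_integral 1) UNIV"
    then show "(\<forall>h0 dh. dh \<noteq> 0 \<longrightarrow> hopf_solution_upto (shock_wave \<theta> h0 dh (h0 + dh / 2)) T l)
             \<longleftrightarrow> (\<forall>k<l. (1/2) * integral UNIV (\<lambda>x. x ^ k * \<theta> x)
                     = integral UNIV (\<lambda>x. x ^ k * \<theta> x * Kfun \<theta> x))"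
      using partB[OF _ assms] by (elim conjE)
  qed
next
  show "1 \<le> l \<longrightarrow> (\<forall>\<theta> h0 dh a. schwartz \<theta> \<and> (\<theta> has_integral 1) UNIV \<and> dh \<noteq> 0 \<and>
            hopf_solution_upto (shock_wave \<theta> h0 dh a) T l \<longrightarrow> (a - h0) / dh = 1/2)"
  proof (intro impI allI)
    fix \<theta> :: "real \<Rightarrow> real" and h0 dh a :: real
    assume l: "1 \<le> l" and H: "schwartz \<theta> \<and> (\<theta> has_integral 1) UNIV \<and> dh \<noteq> 0 \<and>
            hopf_solution_upto (shock_wave \<theta> h0 dh a) T l"
    then show "(a - h0) / dh = 1/2" using partC[OF _ _ _ assms _ l] by (elim conjE)
  qed
qed

end
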